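(* Let $N\ge1$, let $\omega_1,\omega_2$ be nonzero complex numbers with $\sin\frac{2\pi\omega_1}{\omega_2}\ne0$, and put $q=e^{2\pi i\omega_1/\omega_2}$. Fix complex constants $\gamma_{N1},\dots,\gamma_{NN}$, and let the following operators act on meromorphic functions of the variables $\gamma_{nj}$, $n=1,\dots,N-1$, $1\le j\le n$ (with $e^{\pm i\omega_1\partial_{\gamma_{nj}}}$ the shift $\gamma_{nj}\mapsto\gamma_{nj}\pm i\omega_1$): $$\varrho(K_{nn})=e^{\frac{2\pi}{\omega_2}\left(\sum_{j=1}^n\gamma_{nj}-\sum_{j=1}^{n-1}\gamma_{n-1,j}\right)},$$ $$\varrho(E_{n,n+1})=\frac{2i\,e^{\frac{\pi i\omega_1}{\omega_2}(n-1)}}{\sin\frac{2\pi\omega_1}{\omega_2}}\sum_{j=1}^n\frac{\prod_{r=1}^{n+1}\sinh\frac{2\pi}{\omega_2}(\gamma_{nj}-\gamma_{n+1,r}-\frac{i\omega_1}{2})}{\prod_{s\ne j}\sinh\frac{2\pi}{\omega_2}(\gamma_{nj}-\gamma_{ns})}e^{-i\omega_1\partial_{\gamma_{nj}}},$$ $$\varrho(E_{n+1,n})=-\frac{i\,e^{-\frac{\pi i\omega_1}{\omega_2}(n-1)}}{2\sin\frac{2\pi\omega_1}{\omega_2}}\sum_{j=1}^n\frac{\prod_{r=1}^{n-1}\sinh\frac{2\pi}{\omega_2}(\gamma_{nj}-\gamma_{n-1,r}+\frac{i\omega_1}{2})}{\prod_{s\ne j}\sinh\frac{2\pi}{\omega_2}(\gamma_{nj}-\gamma_{ns})}e^{i\omega_1\partial_{\gamma_{nj}}}.$$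 Then these operators define a representation of $U_q(\mathfrak{gl}(N))$ with $q=e^{2\pi i\omega_1/\omega_2}$, i.e. they satisfy all defining relations of $U_q(\mathfrak{gl}(N))$.
   Context: $U_q(\mathfrak{gl}(N))$ (here with $q$ specialized to the given complex number) is the algebra generated by $K_{nn}^{\pm1}$ ($1\le n\le N$), $E_{n,n+1},E_{n+1,n}$ ($1\le n\le N-1$) with relations: the $K$'s commute and $K_{nn}K_{nn}^{-1}=1$; $K_{nn}E_{m,m+1}K_{nn}^{-1}=q^{\delta_{nm}-\delta_{n,m+1}}E_{m,m+1}$; $K_{nn}E_{m+1,m}K_{nn}^{-1}=q^{\delta_{n,m+1}-\delta_{nm}}E_{m+1,m}$; $E_{n,n+1}E_{m+1,m}-E_{m+1,m}E_{n,n+1}=\delta_{nm}\frac{K_{nn}K_{n+1,n+1}^{-1}-K_{nn}^{-1}K_{n+1,n+1}}{q-q^{-1}}$; and for $X_n=E_{n,n+1}$ and for $X_n=E_{n+1,n}$: $[X_n,X_m]=0$ for $m\ne n\pm1$, $X_n^2X_{n+1}-(q+q^{-1})X_nX_{n+1}X_n+X_{n+1}X_n^2=0$, $X_{n+1}^2X_n-(q+q^{-1})X_{n+1}X_nX_{n+1}+X_nX_{n+1}^2=0$. Empty products are $1$. *)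

theory Defs
  imports Complex_Main
begin

text \<open>Points: an assignment x of the variables gamma_{nj} (n = 1..N-1, 1 <= j <= n), encoded
  as x n j.  Functions acted upon: arbitrary complex-valued functions of such assignments.\<close>

type_synonym point = "nat \<Rightarrow> nat \<Rightarrow> complex"
type_synonym fn = "point \<Rightarrow> complex"
type_synonym oper = "fn \<Rightarrow> fn"

text \<open>gamma_{nj}; the row n = N consists of the fixed constants gN j.\<close>
definition gam :: "nat \<Rightarrow> (nat \<Rightarrow> complex) \<Rightarrow> point \<Rightarrow> nat \<Rightarrow> nat \<Rightarrow> complex" where
  "gam N gN x n j = (if n = N then gN j else x n j)"

definition shift :: "point \<Rightarrow> nat \<Rightarrow> nat \<Rightarrow> complex \<Rightarrow> point" where
  "shift x n j d = x(n := (x n)(j := x n j + d))"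

definition Kexp :: "nat \<Rightarrow> complex \<Rightarrow> (nat \<Rightarrow> complex) \<Rightarrow> nat \<Rightarrow> point \<Rightarrow> complex" where
  "Kexp N w2 gN n x = 2 * of_real pi / w2 *
     ((\<Sum>j=1..n. gam N gN x n j) - (\<Sum>j=1..n-1. gam N gN x (n-1) j))"

definition Kop :: "nat \<Rightarrow> complex \<Rightarrow> (nat \<Rightarrow> complex) \<Rightarrow> nat \<Rightarrow> oper" where
  "Kop N w2 gN n f x = exp (Kexp N w2 gN n x) * f x"

definition Kinvop :: "nat \<Rightarrow> complex \<Rightarrow> (nat \<Rightarrow> complex) \<Rightarrow> nat \<Rightarrow> oper" where
  "Kinvop N w2 gN n f x = exp (- Kexp N w2 gN n x) * f x"

definition Eop :: "nat \<Rightarrow> complex \<Rightarrow> complex \<Rightarrow> (nat \<Rightarrow> complex) \<Rightarrow> nat \<Rightarrow> oper" where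
  "Eop N w1 w2 gN n f x =
     (2 * \<i> * exp (of_real pi * \<i> * w1 / w2 * (of_nat n - 1)) / sin (2 * of_real pi * w1 / w2)) *
     (\<Sum>j=1..n.
        (\<Prod>r=1..n+1. sinh (2 * of_real pi / w2 *
             (gam N gN x n j - gam N gN x (n+1) r - \<i> * w1 / 2)))
        / (\<Prod>s\<in>{1..n} - {j}. sinh (2 * of_real pi / w2 * (gam N gN x n j - gam N gN x n s)))
        * f (shift x n j (- \<i> * w1)))"

definition Fop :: "nat \<Rightarrow> complex \<Rightarrow> complex \<Rightarrow> (nat \<Rightarrow> complex) \<Rightarrow> nat \<Rightarrow> oper" where
  "Fop N w1 w2 gN n f x =
     - (\<i> * exp (- (of_real pi * \<i> * w1 / w2 * (of_nat n - 1))) / (2 * sin (2 * of_real pi * w1 / w2))) *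
     (\<Sum>j=1..n.
        (\<Prod>r=1..n-1. sinh (2 * of_real pi / w2 *
             (gam N gN x n j - gam N gN x (n-1) r + \<i> * w1 / 2)))
        / (\<Prod>s\<in>{1..n} - {j}. sinh (2 * of_real pi / w2 * (gam N gN x n j - gam N gN x n s)))
        * f (shift x n j (\<i> * w1)))"

text \<open>This set is invariant
  under all shifts occurring in the operators, and identities of difference operators with
  meromorphic coefficients are exactly pointwise identities on it.\<close>
definition generic :: "nat \<Rightarrow> complex \<Rightarrow> complex \<Rightarrow> point \<Rightarrow> bool" where
  "generic N w1 w2 x \<longleftrightarrow>
     (\<forall>n\<in>{1..<N}. \<forall>j\<in>{1..n}. \<forall>s\<in>{1..n}. j \<noteq> s \<longrightarrow>
        (\<forall>k::int. sinh (2 * of_real pi / w2 * (x n j - x n s + of_int k * \<i> * w1)) \<noteq> 0))"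

definition serre_rels :: "nat \<Rightarrow> complex \<Rightarrow> (nat \<Rightarrow> oper) \<Rightarrow> (point \<Rightarrow> bool) \<Rightarrow> bool" where
  "serre_rels N q X D \<longleftrightarrow>
     (\<forall>n\<in>{1..<N}. \<forall>m\<in>{1..<N}. m \<noteq> n + 1 \<and> n \<noteq> m + 1 \<longrightarrow>
        (\<forall>f x. D x \<longrightarrow> X n (X m f) x = X m (X n f) x)) \<and>
     (\<forall>n. 1 \<le> n \<and> n + 1 < N \<longrightarrow> (\<forall>f x. D x \<longrightarrow>
        X n (X n (X (n+1) f)) x - (q + inverse q) * X n (X (n+1) (X n f)) x
          + X (n+1) (X n (X n f)) x = 0)) \<and>
     (\<forall>n. 1 \<le> n \<and> n + 1 < N \<longrightarrow> (\<forall>f x. D x \<longrightarrow>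
        X (n+1) (X (n+1) (X n f)) x - (q + inverse q) * X (n+1) (X n (X (n+1) f)) x
          + X n (X (n+1) (X (n+1) f)) x = 0))"

definition Uq_gl_rep :: "nat \<Rightarrow> complex \<Rightarrow> (nat \<Rightarrow> oper) \<Rightarrow> (nat \<Rightarrow> oper) \<Rightarrow> (nat \<Rightarrow> oper)
    \<Rightarrow> (nat \<Rightarrow> oper) \<Rightarrow> (point \<Rightarrow> bool) \<Rightarrow> bool" where
  "Uq_gl_rep N q K Ki E F D \<longleftrightarrow>
     (\<forall>n\<in>{1..N}. \<forall>m\<in>{1..N}. \<forall>f x. D x \<longrightarrow> K n (K m f) x = K m (K n f) x) \<and>
     (\<forall>n\<in>{1..N}. \<forall>f x. D x \<longrightarrow> K n (Ki n f) x = f x \<and> Ki n (K n f) x = f x) \<and>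
     (\<forall>n\<in>{1..N}. \<forall>m\<in>{1..<N}. \<forall>f x. D x \<longrightarrow>
        K n (E m (Ki n f)) x = q powi (of_bool (n = m) - of_bool (n = m + 1)) * E m f x) \<and>
     (\<forall>n\<in>{1..N}. \<forall>m\<in>{1..<N}. \<forall>f x. D x \<longrightarrow>
        K n (F m (Ki n f)) x = q powi (of_bool (n = m + 1) - of_bool (n = m)) * F m f x) \<and>
     (\<forall>n\<in>{1..<N}. \<forall>m\<in>{1..<N}. \<forall>f x. D x \<longrightarrow>
        E n (F m f) x - F m (E n f) x =
          (if n = m then (K n (Ki (n+1) f) x - Ki n (K (n+1) f) x) / (q - inverse q) else 0)) \<and>
     serre_rels N q E D \<and> serre_rels N q F D"

end

theory Submission
  imports Defs "HOL-Analysis.Complex_Transcendental"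
begin

definition gco :: "nat \<Rightarrow> (nat \<Rightarrow> complex) \<Rightarrow> complex \<Rightarrow> complex \<Rightarrow> nat \<Rightarrow> nat \<Rightarrow> point \<Rightarrow> nat \<Rightarrow> complex" where
  "gco N gN T d p p' x j =
     (\<Prod>r=1..p'. sinh (T * (gam N gN x p j - gam N gN x p' r + d/2))) /
     (\<Prod>s\<in>{1..p}-{j}. sinh (T * (gam N gN x p j - gam N gN x p s)))"

definition Gop :: "nat \<Rightarrow> (nat \<Rightarrow> complex) \<Rightarrow> complex \<Rightarrow> complex \<Rightarrow> complex \<Rightarrow> nat \<Rightarrow> nat \<Rightarrow> oper" where
  "Gop N gN T d C p p' f x = C * (\<Sum>j=1..p. gco N gN T d p p' x j * f (shift x p j d))"

lemma gam_shift_same: "p \<noteq> N \<Longrightarrow> gam N gN (shift x p j d) p j = gam N gN x p j + d"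
  by (simp add: gam_def shift_def)

lemma gam_shift_other: "q \<noteq> p \<or> r \<noteq> j \<Longrightarrow> gam N gN (shift x p j d) q r = gam N gN x q r"
  by (auto simp: gam_def shift_def)

lemma gam_shift_row: "q \<noteq> p \<Longrightarrow> gam N gN (shift x p j d) q r = gam N gN x q r"
  by (auto simp: gam_def shift_def)

lemma shift_comm: "shift (shift x p j d) q k e = shift (shift x q k e) p j d"
  by (rule ext, rule ext) (auto simp: shift_def)

lemma shift_inv: "shift (shift x p j d) p j (- d) = x"
  by (rule ext, rule ext) (auto simp: shift_def)

lemma gco_shift_indep: "q \<noteq> p \<Longrightarrow> q \<noteq> p' \<Longrightarrow> gco N gN T d p p' (shift x q k e) j = gco N gN T d p p' x j"
  unfolding gco_def by (simp add: gam_shift_row)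

lemma Gop_indep:
  assumes "q \<noteq> p" "q \<noteq> p'" "p \<noteq> q" "p \<noteq> q'"
  shows "Gop N gN T d C p p' (Gop N gN T e D q q' f) x = Gop N gN T e D q q' (Gop N gN T d C p p' f) x"
proof -
  have "Gop N gN T d C p p' (Gop N gN T e D q q' f) x =
    C * D * (\<Sum>j=1..p. \<Sum>k=1..q. gco N gN T d p p' x j * gco N gN T e q q' x k * f (shift (shift x p j d) q k e))"
    unfolding Gop_def using assms
    by (simp add: gco_shift_indep sum_distrib_left mult_ac)
  also have "\<dots> = C * D * (\<Sum>k=1..q. \<Sum>j=1..p. gco N gN T d p p' x j * gco N gN T e q q' x k * f (shift (shift x q k e) p j d))"
    by (subst sum.swap) (simp add: shift_comm)
  also have "\<dots> = Gop N gN T e D q q' (Gop N gN T d C p p' f) x"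
    unfolding Gop_def using assms
    by (simp add: gco_shift_indep sum_distrib_left mult_ac)
  finally show ?thesis .
qed

definition Nm :: "nat \<Rightarrow> (nat \<Rightarrow> complex) \<Rightarrow> complex \<Rightarrow> complex \<Rightarrow> nat \<Rightarrow> nat \<Rightarrow> point \<Rightarrow> nat \<Rightarrow> complex" where
  "Nm N gN T d p p' y j = (\<Prod>r\<in>{1..p'}. sinh (T * (gam N gN y p j - gam N gN y p' r + d/2)))"
definition NRl :: "nat \<Rightarrow> (nat \<Rightarrow> complex) \<Rightarrow> complex \<Rightarrow> complex \<Rightarrow> nat \<Rightarrow> nat \<Rightarrow> point \<Rightarrow> nat \<Rightarrow> nat \<Rightarrow> complex" where
  "NRl N gN T d p p' y j l = (\<Prod>r\<in>{1..p'}-{l}. sinh (T * (gam N gN y p j - gam N gN y p' r + d/2)))"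
definition NR2 :: "nat \<Rightarrow> (nat \<Rightarrow> complex) \<Rightarrow> complex \<Rightarrow> complex \<Rightarrow> nat \<Rightarrow> nat \<Rightarrow> point \<Rightarrow> nat \<Rightarrow> nat \<Rightarrow> nat \<Rightarrow> complex" where
  "NR2 N gN T d p p' y j l m = (\<Prod>r\<in>{1..p'}-{l}-{m}. sinh (T * (gam N gN y p j - gam N gN y p' r + d/2)))"
definition Dl :: "nat \<Rightarrow> (nat \<Rightarrow> complex) \<Rightarrow> complex \<Rightarrow> nat \<Rightarrow> point \<Rightarrow> nat \<Rightarrow> complex" where
  "Dl N gN T p y j = (\<Prod>s\<in>{1..p}-{j}. sinh (T * (gam N gN y p j - gam N gN y p s)))"
definition DRl :: "nat \<Rightarrow> (nat \<Rightarrow> complex) \<Rightarrow> complex \<Rightarrow> nat \<Rightarrow> point \<Rightarrow> nat \<Rightarrow> nat \<Rightarrow> complex" where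
  "DRl N gN T p y j k = (\<Prod>s\<in>{1..p}-{j}-{k}. sinh (T * (gam N gN y p j - gam N gN y p s)))"

lemma gco_Nm_Dl: "gco N gN T d p p' y j = Nm N gN T d p p' y j / Dl N gN T p y j"
  unfolding gco_def Nm_def Dl_def atLeastAtMost_iff by simp

lemma Nm_split: "l \<in> {1..p'} \<Longrightarrow>
  Nm N gN T d p p' y j = NRl N gN T d p p' y j l * sinh (T * (gam N gN y p j - gam N gN y p' l + d/2))"
  unfolding Nm_def NRl_def by (subst prod.remove[where x=l]) (auto simp: mult.commute)

lemma NRl_split: "m \<in> {1..p'} \<Longrightarrow> m \<noteq> l \<Longrightarrow>
  NRl N gN T d p p' y j l = NR2 N gN T d p p' y j l m * sinh (T * (gam N gN y p j - gam N gN y p' m + d/2))"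
  unfolding NR2_def NRl_def by (subst prod.remove[where x=m]) (auto simp: mult.commute)

lemma Dl_split: "k \<in> {1..p} \<Longrightarrow> k \<noteq> j \<Longrightarrow>
  Dl N gN T p y j = DRl N gN T p y j k * sinh (T * (gam N gN y p j - gam N gN y p k))"
  unfolding Dl_def DRl_def by (subst prod.remove[where x=k]) (auto simp: mult.commute)

lemma Nm_shift: "q \<noteq> p' \<Longrightarrow> q \<noteq> p \<or> i \<noteq> j \<Longrightarrow>
  Nm N gN T d p p' (shift y q i e) j = Nm N gN T d p p' y j"
  unfolding Nm_def by (intro prod.cong refl) (auto simp: gam_shift_other)

lemma NRl_shift: "q \<noteq> p \<or> i \<noteq> j \<Longrightarrow> q \<noteq> p' \<or> i = l \<Longrightarrow>
  NRl N gN T d p p' (shift y q i e) j l = NRl N gN T d p p' y j l"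
  unfolding NRl_def by (intro prod.cong refl) (auto simp: gam_shift_other)

lemma NR2_shift: "q \<noteq> p \<or> i \<noteq> j \<Longrightarrow> q \<noteq> p' \<or> i = l \<or> i = m \<Longrightarrow>
  NR2 N gN T d p p' (shift y q i e) j l m = NR2 N gN T d p p' y j l m"
  unfolding NR2_def by (intro prod.cong refl) (auto simp: gam_shift_other)

lemma Dl_shift: "q \<noteq> p \<Longrightarrow> Dl N gN T p (shift y q i e) j = Dl N gN T p y j"
  unfolding Dl_def by (intro prod.cong refl) (simp add: gam_shift_other)

lemma DRl_shift: "q \<noteq> p \<or> i = k \<Longrightarrow> k \<noteq> j \<Longrightarrow>
  DRl N gN T p (shift y q i e) j k = DRl N gN T p y j k"
  unfolding DRl_def by (intro prod.cong refl) (auto simp: gam_shift_other)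

lemma DRl_nz:
  assumes "\<And>s. s \<in> {1..p} \<Longrightarrow> s \<noteq> j \<Longrightarrow> sinh (T * (gam N gN y p j - gam N gN y p s)) \<noteq> 0"
  shows "DRl N gN T p y j k \<noteq> 0"
  unfolding DRl_def using assms by (simp add: prod_zero_iff)

lemma Dl_nz:
  assumes "\<And>s. s \<in> {1..p} \<Longrightarrow> s \<noteq> j \<Longrightarrow> sinh (T * (gam N gN y p j - gam N gN y p s)) \<noteq> 0"
  shows "Dl N gN T p y j \<noteq> 0"
  unfolding Dl_def using assms by (simp add: prod_zero_iff)

lemma sum_antisym:
  fixes g :: "nat \<Rightarrow> nat \<Rightarrow> complex"
  assumes "finite A" "\<And>j k. j \<in> A \<Longrightarrow> k \<in> A \<Longrightarrow> g j k + g k j = 0"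
  shows "(\<Sum>j\<in>A. \<Sum>k\<in>A. g j k) = 0"
proof -
  have "(\<Sum>j\<in>A. \<Sum>k\<in>A. g j k) = (\<Sum>j\<in>A. \<Sum>k\<in>A. g k j)" by (rule sum.swap)
  then have "2 * (\<Sum>j\<in>A. \<Sum>k\<in>A. g j k) = (\<Sum>j\<in>A. \<Sum>k\<in>A. g j k) + (\<Sum>j\<in>A. \<Sum>k\<in>A. g k j)" by simp
  also have "\<dots> = (\<Sum>j\<in>A. \<Sum>k\<in>A. g j k + g k j)" by (simp add: sum.distrib)
  also have "\<dots> = 0" using assms(2) by simp
  finally show ?thesis by simp
qed

lemma two_point:
  fixes P Q P' Q' w1 w2 :: complex
  assumes h1: "P * cosh w1 - Q * sinh w1 = P' * cosh w1 - Q' * sinh w1"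
    and h2: "P * cosh w2 - Q * sinh w2 = P' * cosh w2 - Q' * sinh w2"
    and nz: "sinh (w1 - w2) \<noteq> 0"
  shows "P = P' \<and> Q = Q'"
proof -
  define a where "a = P - P'"
  define b where "b = Q - Q'"
  have e1: "a * cosh w1 = b * sinh w1" using h1 unfolding a_def b_def by (simp add: algebra_simps)
  have e2: "a * cosh w2 = b * sinh w2" using h2 unfolding a_def b_def by (simp add: algebra_simps)
  have "a * sinh (w1 - w2) = a * cosh w2 * sinh w1 - a * cosh w1 * sinh w2"
    by (simp add: sinh_diff algebra_simps)
  also have "\<dots> = 0" using e1 e2 by (simp add: algebra_simps)
  finally have a0: "a = 0" using nz by simp
  have "b * sinh (w1 - w2) = b * sinh w1 * cosh w2 - b * sinh w2 * cosh w1"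
    by (simp add: sinh_diff algebra_simps)
  also have "\<dots> = a * cosh w1 * cosh w2 - a * cosh w2 * cosh w1"
    using e1 e2 by simp
  also have "\<dots> = 0" by simp
  finally have b0: "b = 0" using nz by simp
  show ?thesis using a0 b0 unfolding a_def b_def by simp
qed

lemma sinh_partial:
  fixes u :: "'a \<Rightarrow> complex" and v :: "'b \<Rightarrow> complex"
  assumes "finite I" "finite J" "card I = card J"
    and "\<And>i k. i \<in> I \<Longrightarrow> k \<in> I \<Longrightarrow> i \<noteq> k \<Longrightarrow> sinh (u i - u k) \<noteq> 0"
  shows "(\<Sum>i\<in>I. (\<Prod>r\<in>J. sinh (u i - v r)) / (\<Prod>k\<in>I-{i}. sinh (u i - u k)))
           = sinh (sum u I - sum v J)"
  using assms
proof (induction "card I" arbitrary: I J v)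
  case 0
  then show ?case by simp
next
  case (Suc n)
  from Suc.hyps(2) have "I \<noteq> {}" by auto
  then obtain m where mI: "m \<in> I" by blast
  from Suc.hyps(2) Suc.prems(3) have "J \<noteq> {}" by auto
  then obtain p where pJ: "p \<in> J" by blast
  define Cst where "Cst i = (\<Prod>r\<in>J-{p}. sinh (u i - v r)) / (\<Prod>k\<in>I-{i}. sinh (u i - u k))" for i
  define F where "F w = (\<Sum>i\<in>I. Cst i * sinh (u i - w))" for w
  define S0 where "S0 = sum u I - sum v (J-{p})"
  define R where "R w = sinh (S0 - w)" for w
  have lhs: "(\<Sum>i\<in>I. (\<Prod>r\<in>J. sinh (u i - v r)) / (\<Prod>k\<in>I-{i}. sinh (u i - u k))) = F (v p)"
    unfolding F_def Cst_def
    by (intro sum.cong refl) (simp add: prod.remove[OF Suc.prems(2) pJ])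
  have rhs: "sinh (sum u I - sum v J) = R (v p)"
    unfolding R_def S0_def by (simp add: sum.remove[OF Suc.prems(2) pJ] algebra_simps)
  have key: "F (u m') = R (u m')" if m'I: "m' \<in> I" for m'
  proof -
    have "F (u m') = (\<Sum>i\<in>I-{m'}. Cst i * sinh (u i - u m'))"
      unfolding F_def by (simp add: sum.remove[OF Suc.prems(1) m'I])
    also have "\<dots> = (\<Sum>i\<in>I-{m'}. (\<Prod>r\<in>J-{p}. sinh (u i - v r)) / (\<Prod>k\<in>(I-{m'})-{i}. sinh (u i - u k)))"
    proof (intro sum.cong refl)
      fix i assume iI: "i \<in> I - {m'}"
      have fin: "finite (I - {i})" using Suc.prems(1) by simp
      have mm: "m' \<in> I - {i}" using iI m'I by auto
      have nz: "sinh (u i - u m') \<noteq> 0" using Suc.prems(4)[of i m'] iI m'I by auto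
      have "(\<Prod>k\<in>I-{i}. sinh (u i - u k)) = sinh (u i - u m') * (\<Prod>k\<in>(I-{m'})-{i}. sinh (u i - u k))"
      proof -
        have "(I-{m'})-{i} = (I-{i})-{m'}" by auto
        then show ?thesis using prod.remove[OF fin mm] by simp
      qed
      then show "Cst i * sinh (u i - u m') = (\<Prod>r\<in>J-{p}. sinh (u i - v r)) / (\<Prod>k\<in>(I-{m'})-{i}. sinh (u i - u k))"
        unfolding Cst_def using nz by simp
    qed
    also have "\<dots> = sinh (sum u (I-{m'}) - sum v (J-{p}))"
      apply (rule Suc.hyps(1))
      using Suc.hyps(2) Suc.prems m'I pJ by (auto simp: card_Diff_singleton)
    also have "\<dots> = R (u m')"
      unfolding R_def S0_def by (simp add: sum.remove[OF Suc.prems(1) m'I] algebra_simps)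
    finally show ?thesis .
  qed
  define Pc where "Pc = (\<Sum>i\<in>I. Cst i * sinh (u i))"
  define Qc where "Qc = (\<Sum>i\<in>I. Cst i * cosh (u i))"
  have Fform: "F w = Pc * cosh w - Qc * sinh w" for w
  proof -
    have "F w = (\<Sum>i\<in>I. Cst i * sinh (u i) * cosh w - Cst i * cosh (u i) * sinh w)"
      unfolding F_def by (intro sum.cong refl) (simp add: sinh_diff algebra_simps)
    also have "\<dots> = Pc * cosh w - Qc * sinh w"
      unfolding Pc_def Qc_def by (simp add: sum_subtractf sum_distrib_right)
    finally show ?thesis .
  qed
  have Rform: "R w = sinh S0 * cosh w - cosh S0 * sinh w" for w
    unfolding R_def by (simp add: sinh_diff)
  show ?case
  proof (cases "n = 0")
    case True
    then have "I = {m}" using Suc.hyps(2) mI by (metis One_nat_def card_1_singletonE singletonD)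
    moreover have "J = {p}" using True Suc.hyps(2) Suc.prems(3) pJ
      by (metis One_nat_def card_1_singletonE singletonD)
    ultimately show ?thesis by simp
  next
    case False
    then have "card (I - {m}) \<noteq> 0" using Suc.hyps(2) mI by (simp add: card_Diff_singleton)
    then obtain k where kI: "k \<in> I - {m}" by (metis card.empty ex_in_conv)
    have nz: "sinh (u m - u k) \<noteq> 0" using Suc.prems(4)[of m k] kI mI by auto
    have k1: "Pc * cosh (u m) - Qc * sinh (u m) = sinh S0 * cosh (u m) - cosh S0 * sinh (u m)"
      using key[OF mI] unfolding Fform Rform .
    have k2: "Pc * cosh (u k) - Qc * sinh (u k) = sinh S0 * cosh (u k) - cosh S0 * sinh (u k)"
      using key[of k] kI unfolding Fform Rform by simp
    have "Pc = sinh S0 \<and> Qc = cosh S0"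
      by (rule two_point[OF k1 k2 nz])
    then show ?thesis unfolding lhs rhs Fform Rform by simp
  qed
qed

definition ss0 :: "complex \<Rightarrow> complex" where "ss0 X = X - inverse X"

lemma sinh_ss: "sinh (z::complex) = inverse 2 * ss0 (exp z)"
  by (simp add: sinh_field_def exp_minus ss0_def field_simps)

lemma core_rat0:
  fixes U V H :: complex
  assumes "U \<noteq> 0" "V \<noteq> 0" "H \<noteq> 0"
  shows "(ss0 (U*H) * ss0 (V*H) - (H*H + inverse (H*H)) * ss0 (U*H) * ss0 (V/H) + ss0 (U/H) * ss0 (V/H)) * ss0 (U/(V*(H*H)))
       = (ss0 (V*H) * ss0 (U*H) - (H*H + inverse (H*H)) * ss0 (V*H) * ss0 (U/H) + ss0 (V/H) * ss0 (U/H)) * ss0 (V/(U*(H*H)))"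
  using assms unfolding ss0_def by (simp add: field_simps)

lemma core_rat:
  fixes U V H k :: complex
  assumes "U \<noteq> 0" "V \<noteq> 0" "H \<noteq> 0"
  shows "((k * ss0 (U*H)) * (k * ss0 (V*H)) - (H*H + inverse (H*H)) * (k * ss0 (U*H)) * (k * ss0 (V/H)) + (k * ss0 (U/H)) * (k * ss0 (V/H))) * (k * ss0 (U/(V*(H*H))))
       = ((k * ss0 (V*H)) * (k * ss0 (U*H)) - (H*H + inverse (H*H)) * (k * ss0 (V*H)) * (k * ss0 (U/H)) + (k * ss0 (V/H)) * (k * ss0 (U/H))) * (k * ss0 (V/(U*(H*H))))"
proof -
  from arg_cong[where f="\<lambda>z. k*k*k*z", OF core_rat0[OF assms]] show ?thesis
    by (simp add: algebra_simps)
qed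

lemma core_poly:
  fixes u v h :: complex
  shows "(sinh (u+h) * sinh (v+h) - (exp (2*h) + exp (-(2*h))) * sinh (u+h) * sinh (v-h) + sinh (u-h) * sinh (v-h)) * sinh (u-v-2*h)
       = (sinh (v+h) * sinh (u+h) - (exp (2*h) + exp (-(2*h))) * sinh (v+h) * sinh (u-h) + sinh (v-h) * sinh (u-h)) * sinh (v-u-2*h)"
proof -
  have eh2: "exp (2*h) = exp h * exp h"
    by (simp only: mult_2 exp_add)
  have e: "exp (u+h) = exp u * exp h" "exp (v+h) = exp v * exp h" "exp (u-h) = exp u / exp h"
    "exp (v-h) = exp v / exp h" "exp (u-v-2*h) = exp u / (exp v * (exp h * exp h))"
    "exp (v-u-2*h) = exp v / (exp u * (exp h * exp h))" "exp (2*h) = exp h * exp h"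
    "exp (-(2*h)) = inverse (exp h * exp h)"
    by (simp_all only: exp_add exp_diff exp_minus eh2 divide_divide_eq_left)
  show ?thesis unfolding sinh_ss e by (rule core_rat) auto
qed

lemma three_term:
  fixes y h :: complex
  shows "sinh (y + 2*h) + sinh (y - 2*h) = (exp (2*h) + exp (-(2*h))) * sinh y"
proof -
  have 1: "sinh (y + 2*h) + sinh (y - 2*h) = 2 * sinh y * cosh (2*h)"
    by (simp add: sinh_add sinh_diff)
  have 2: "cosh (2*h) = (exp (2*h) + exp (-(2*h))) / 2"
    by (simp add: cosh_def scaleR_conv_of_real)
  show ?thesis unfolding 1 2 by simp
qed

lemma sinh_swap: "sinh ((y::complex) - x) = - sinh (x - y)"
  by (metis minus_diff_eq sinh_minus)

lemma core_I:
  fixes T d aj ak b n1 n2 e1 e2 Q :: complex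
  assumes nz: "sinh (T*(aj - ak)) \<noteq> 0" "sinh (T*(ak - (aj + d))) \<noteq> 0" "sinh (T*(aj - (ak + d))) \<noteq> 0"
    "e1 \<noteq> 0" "e2 \<noteq> 0"
    and Q: "Q = exp (T*d) + exp (-(T*d))"
  shows "(n1 * sinh (T*(aj - b + d/2)) / (e1 * sinh (T*(aj - ak)))) * (n2 * sinh (T*(ak - b + d/2)) / (e2 * sinh (T*(ak - (aj + d)))))
   - Q * ((n1 * sinh (T*(aj - b + d/2)) / (e1 * sinh (T*(aj - ak)))) * (n2 * sinh (T*(ak - (b + d) + d/2)) / (e2 * sinh (T*(ak - (aj + d))))))
   + (n1 * sinh (T*(aj - (b + d) + d/2)) / (e1 * sinh (T*(aj - ak)))) * (n2 * sinh (T*(ak - (b + d) + d/2)) / (e2 * sinh (T*(ak - (aj + d)))))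
   + ((n2 * sinh (T*(ak - b + d/2)) / (e2 * sinh (T*(ak - aj)))) * (n1 * sinh (T*(aj - b + d/2)) / (e1 * sinh (T*(aj - (ak + d)))))
   - Q * ((n2 * sinh (T*(ak - b + d/2)) / (e2 * sinh (T*(ak - aj)))) * (n1 * sinh (T*(aj - (b + d) + d/2)) / (e1 * sinh (T*(aj - (ak + d))))))
   + (n2 * sinh (T*(ak - (b + d) + d/2)) / (e2 * sinh (T*(ak - aj)))) * (n1 * sinh (T*(aj - (b + d) + d/2)) / (e1 * sinh (T*(aj - (ak + d))))))
   = 0"
proof -
  define u where "u = T*(aj - b)"
  define v where "v = T*(ak - b)"
  define h where "h = T*d/2"
  have a: "T*(aj - b + d/2) = u + h" "T*(ak - b + d/2) = v + h" "T*(ak - (b + d) + d/2) = v - h"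
    "T*(aj - (b + d) + d/2) = u - h" "T*(aj - ak) = u - v" "T*(ak - (aj + d)) = v - u - 2*h"
    "T*(ak - aj) = v - u" "T*(aj - (ak + d)) = u - v - 2*h" "T*d = 2*h"
    unfolding u_def v_def h_def by (simp_all add: algebra_simps)
  have nz': "sinh (u - v) \<noteq> 0" "sinh (v - u - 2*h) \<noteq> 0" "sinh (u - v - 2*h) \<noteq> 0"
    using nz unfolding a by auto
  have sw: "sinh (v - u) = - sinh (u - v)" by (rule sinh_swap)
  define Q' where "Q' = exp (2*h) + exp (-(2*h))"
  have QQ: "Q = Q'" unfolding Q Q'_def a ..
  have key: "(sinh (u+h) * sinh (v+h) - Q' * sinh (u+h) * sinh (v-h) + sinh (u-h) * sinh (v-h)) * sinh (u-v-2*h)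
       = (sinh (v+h) * sinh (u+h) - Q' * sinh (v+h) * sinh (u-h) + sinh (v-h) * sinh (u-h)) * sinh (v-u-2*h)"
    unfolding Q'_def by (rule core_poly)
  define N1 where "N1 = sinh (u+h) * sinh (v+h) - Q' * sinh (u+h) * sinh (v-h) + sinh (u-h) * sinh (v-h)"
  define N2 where "N2 = sinh (v+h) * sinh (u+h) - Q' * sinh (v+h) * sinh (u-h) + sinh (v-h) * sinh (u-h)"
  have key': "N1 * sinh (u-v-2*h) - N2 * sinh (v-u-2*h) = 0"
    using key unfolding N1_def N2_def by simp
  have "(n1 * sinh (u + h) / (e1 * sinh (u - v))) * (n2 * sinh (v + h) / (e2 * sinh (v - u - 2*h)))
   - Q' * ((n1 * sinh (u + h) / (e1 * sinh (u - v))) * (n2 * sinh (v - h) / (e2 * sinh (v - u - 2*h))))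
   + (n1 * sinh (u - h) / (e1 * sinh (u - v))) * (n2 * sinh (v - h) / (e2 * sinh (v - u - 2*h)))
   + ((n2 * sinh (v + h) / (e2 * (- sinh (u - v)))) * (n1 * sinh (u + h) / (e1 * sinh (u - v - 2*h)))
   - Q' * ((n2 * sinh (v + h) / (e2 * (- sinh (u - v)))) * (n1 * sinh (u - h) / (e1 * sinh (u - v - 2*h))))
   + (n2 * sinh (v - h) / (e2 * (- sinh (u - v)))) * (n1 * sinh (u - h) / (e1 * sinh (u - v - 2*h))))
   = n1 * n2 / (e1 * e2) * ((N1 * sinh (u-v-2*h) - N2 * sinh (v-u-2*h)) / (sinh (u - v) * sinh (v - u - 2*h) * sinh (u-v-2*h)))"
    unfolding N1_def N2_def using nz' nz(4,5) by (simp add: field_simps)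
  also have "\<dots> = 0" using key' by simp
  finally show ?thesis unfolding a sw QQ .
qed

lemma three_aux:
  fixes A B C Q n1 n2 e1 e2 :: complex
  assumes "B + C = Q * A"
  shows "(n1 * A / e1) * (n2 * B / e2) - Q * ((n1 * A / e1) * (n2 * A / e2)) + (n1 * C / e1) * (n2 * A / e2) = 0"
proof -
  have "(n1 * A / e1) * (n2 * B / e2) - Q * ((n1 * A / e1) * (n2 * A / e2)) + (n1 * C / e1) * (n2 * A / e2)
      = n1 * n2 * inverse e1 * inverse e2 * A * ((B + C) - Q * A)"
    by (simp add: divide_inverse algebra_simps)
  then show ?thesis using assms by simp
qed

lemma core_diag_I:
  fixes T d aj b n1 n2 e1 e2 Q :: complex
  assumes Q: "Q = exp (T*d) + exp (-(T*d))"
  shows "(n1 * sinh (T*(aj - b + d/2)) / e1) * (n2 * sinh (T*(aj + d - b + d/2)) / e2)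
   - Q * ((n1 * sinh (T*(aj - b + d/2)) / e1) * (n2 * sinh (T*(aj + d - (b + d) + d/2)) / e2))
   + (n1 * sinh (T*(aj - (b + d) + d/2)) / e1) * (n2 * sinh (T*(aj + d - (b + d) + d/2)) / e2) = 0"
proof -
  define u where "u = T*(aj - b)"
  define h where "h = T*d/2"
  have a: "T*(aj - b + d/2) = u + h" "T*(aj + d - b + d/2) = (u + h) + 2*h"
    "T*(aj + d - (b + d) + d/2) = u + h" "T*(aj - (b + d) + d/2) = (u + h) - 2*h" "T*d = 2*h"
    unfolding u_def h_def by (simp_all add: algebra_simps)
  have tt: "sinh ((u + h) + 2*h) + sinh ((u + h) - 2*h) = (exp (2*h) + exp (-(2*h))) * sinh (u + h)"
    by (rule three_term)
  show ?thesis unfolding a Q by (rule three_aux[OF tt])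
qed

lemma core_II:
  fixes T d aj bl bm n e nb1 nb2 eb1 eb2 Q :: complex
  assumes nz: "sinh (T*(bl - bm)) \<noteq> 0" "sinh (T*(bm - (bl + d))) \<noteq> 0" "sinh (T*(bl - (bm + d))) \<noteq> 0"
    "eb1 \<noteq> 0" "eb2 \<noteq> 0" "e \<noteq> 0"
    and Q: "Q = exp (T*d) + exp (-(T*d))"
  shows "(nb1 / (eb1 * sinh (T*(bl - bm)))) * (nb2 / (eb2 * sinh (T*(bm - (bl + d))))) *
     ((n * sinh (T*(aj - (bm + d) + d/2))) * sinh (T*(aj - (bl + d) + d/2)) / e
      - Q * ((n * sinh (T*(aj - bm + d/2))) * sinh (T*(aj - (bl + d) + d/2)) / e)
      + (n * sinh (T*(aj - bm + d/2))) * sinh (T*(aj - bl + d/2)) / e)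
   + (nb2 / (eb2 * sinh (T*(bm - bl)))) * (nb1 / (eb1 * sinh (T*(bl - (bm + d))))) *
     ((n * sinh (T*(aj - (bm + d) + d/2))) * sinh (T*(aj - (bl + d) + d/2)) / e
      - Q * ((n * sinh (T*(aj - (bm + d) + d/2))) * sinh (T*(aj - bl + d/2)) / e)
      + (n * sinh (T*(aj - bm + d/2))) * sinh (T*(aj - bl + d/2)) / e)
   = 0"
proof -
  define u where "u = T*(aj - bl)"
  define v where "v = T*(aj - bm)"
  define h where "h = T*d/2"
  have a: "T*(aj - bl + d/2) = u + h" "T*(aj - bm + d/2) = v + h" "T*(aj - (bm + d) + d/2) = v - h"
    "T*(aj - (bl + d) + d/2) = u - h" "T*(bm - bl) = u - v" "T*(bl - (bm + d)) = v - u - 2*h"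
    "T*(bl - bm) = v - u" "T*(bm - (bl + d)) = u - v - 2*h" "T*d = 2*h"
    unfolding u_def v_def h_def by (simp_all add: algebra_simps)
  have sw: "sinh (v - u) = - sinh (u - v)" by (rule sinh_swap)
  have nz': "sinh (u - v) \<noteq> 0" "sinh (v - u - 2*h) \<noteq> 0" "sinh (u - v - 2*h) \<noteq> 0"
    using nz unfolding a sw by auto
  define Q' where "Q' = exp (2*h) + exp (-(2*h))"
  have QQ: "Q = Q'" unfolding Q Q'_def a ..
  have key: "(sinh (u+h) * sinh (v+h) - Q' * sinh (u+h) * sinh (v-h) + sinh (u-h) * sinh (v-h)) * sinh (u-v-2*h)
       = (sinh (v+h) * sinh (u+h) - Q' * sinh (v+h) * sinh (u-h) + sinh (v-h) * sinh (u-h)) * sinh (v-u-2*h)"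
    unfolding Q'_def by (rule core_poly)
  define N1 where "N1 = sinh (u+h) * sinh (v+h) - Q' * sinh (u+h) * sinh (v-h) + sinh (u-h) * sinh (v-h)"
  define N2 where "N2 = sinh (v+h) * sinh (u+h) - Q' * sinh (v+h) * sinh (u-h) + sinh (v-h) * sinh (u-h)"
  have key': "N1 * sinh (u-v-2*h) - N2 * sinh (v-u-2*h) = 0"
    using key unfolding N1_def N2_def by simp
  have "(nb1 / (eb1 * (- sinh (u - v)))) * (nb2 / (eb2 * sinh (u - v - 2*h))) *
     ((n * sinh (v - h)) * sinh (u - h) / e
      - Q' * ((n * sinh (v + h)) * sinh (u - h) / e)
      + (n * sinh (v + h)) * sinh (u + h) / e)
   + (nb2 / (eb2 * sinh (u - v))) * (nb1 / (eb1 * sinh (v - u - 2*h))) *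
     ((n * sinh (v - h)) * sinh (u - h) / e
      - Q' * ((n * sinh (v - h)) * sinh (u + h) / e)
      + (n * sinh (v + h)) * sinh (u + h) / e)
   = nb1 * nb2 * n / (eb1 * eb2 * e) * ((N1 * sinh (u-v-2*h) - N2 * sinh (v-u-2*h)) / (sinh (u - v) * sinh (v - u - 2*h) * sinh (u-v-2*h)))"
    unfolding N1_def N2_def using nz' nz(4,5,6) by (simp add: field_simps)
  also have "\<dots> = 0" using key' by simp
  finally show ?thesis unfolding a sw QQ .
qed

lemma core_diag_II:
  fixes T d aj bl n e Q :: complex
  assumes Q: "Q = exp (T*d) + exp (-(T*d))"
  shows "n * sinh (T*(aj - (bl + d + d) + d/2)) / e - Q * (n * sinh (T*(aj - (bl + d) + d/2)) / e)
     + n * sinh (T*(aj - bl + d/2)) / e = 0"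
proof -
  define u where "u = T*(aj - bl)"
  define h where "h = T*d/2"
  have a: "T*(aj - (bl + d + d) + d/2) = (u - h) - 2*h" "T*(aj - (bl + d) + d/2) = u - h"
    "T*(aj - bl + d/2) = (u - h) + 2*h" "T*d = 2*h"
    unfolding u_def h_def by (simp_all add: algebra_simps)
  have tt: "sinh ((u - h) + 2*h) + sinh ((u - h) - 2*h) = (exp (2*h) + exp (-(2*h))) * sinh (u - h)"
    by (rule three_term)
  have gen: "B + C = Q * A \<Longrightarrow> n * C / e - Q * (n * A / e) + n * B / e = 0" for A B C Q :: complex
  proof -
    assume h: "B + C = Q * A"
    have "n * C / e - Q * (n * A / e) + n * B / e = n / e * ((B + C) - Q * A)"
      by (simp add: divide_inverse algebra_simps)
    then show ?thesis using h by simp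
  qed
  show ?thesis unfolding a Q by (rule gen[OF tt])
qed

lemma core_EF:
  fixes T d aj bk n1 n2 e1 e2 :: complex
  shows "(n1 * sinh (T*(aj - bk + d/2)) / e1) * (n2 * sinh (T*(bk - (aj + d) + - d/2)) / e2)
       = (n2 * sinh (T*(bk - aj + - d/2)) / e2) * (n1 * sinh (T*(aj - (bk + - d) + d/2)) / e1)"
proof -
  have a: "T*(bk - (aj + d) + - d/2) = - (T*(aj - (bk + - d) + d/2))"
    "T*(bk - aj + - d/2) = - (T*(aj - bk + d/2))"
    by (simp_all add: algebra_simps)
  show ?thesis unfolding a sinh_minus by (simp add: algebra_simps)
qed

lemma core_off:
  fixes T d aj ak nA nB eA eB :: complex
  shows "(nA / (eA * sinh (T*(aj - ak)))) * (nB / (eB * sinh (T*(ak - (aj + d)))))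
       = (nB / (eB * sinh (T*(ak - aj)))) * (nA / (eA * sinh (T*(aj - (ak + - d)))))"
proof -
  have a: "T*(ak - aj) = - (T*(aj - ak))" "T*(aj - (ak + - d)) = - (T*(ak - (aj + d)))"
    by (simp_all add: algebra_simps)
  show ?thesis unfolding a sinh_minus by (simp add: divide_inverse algebra_simps)
qed

lemma A_form:
  assumes "j \<in> {1..p}" "k \<in> {1..p}" "k \<noteq> j" "l \<in> {1..p'}"
  shows "gco N gN T d p p' y j = NRl N gN T d p p' y j l * sinh (T * (gam N gN y p j - gam N gN y p' l + d/2))
      / (DRl N gN T p y j k * sinh (T * (gam N gN y p j - gam N gN y p k)))"
  unfolding gco_Nm_Dl using assms by (simp add: Nm_split Dl_split)

lemma A_form_diag:
  assumes "l \<in> {1..p'}"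
  shows "gco N gN T d p p' y j = NRl N gN T d p p' y j l * sinh (T * (gam N gN y p j - gam N gN y p' l + d/2))
      / Dl N gN T p y j"
  unfolding gco_Nm_Dl using assms by (simp add: Nm_split)

lemma serre_I_local:
  fixes x :: point
  assumes pN: "p \<noteq> N" "p' \<noteq> N" and pp: "p \<noteq> p'" "p' \<noteq> p"
    and Q: "Q = exp (T*d) + exp (-(T*d))"
    and g1: "\<And>j k. j \<in> {1..p} \<Longrightarrow> k \<in> {1..p} \<Longrightarrow> j \<noteq> k \<Longrightarrow> sinh (T*(gam N gN x p j - gam N gN x p k)) \<noteq> 0"
    and g2: "\<And>j k. j \<in> {1..p} \<Longrightarrow> k \<in> {1..p} \<Longrightarrow> j \<noteq> k \<Longrightarrow> sinh (T*(gam N gN x p j - (gam N gN x p k + d))) \<noteq> 0"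
    and jk: "j \<in> {1..p}" "k \<in> {1..p}" and l: "l \<in> {1..p'}"
  defines "A \<equiv> gco N gN T d p p'"
  shows "(A x j * A (shift x p j d) k - Q * (A x j * A (shift (shift x p j d) p' l d) k)
           + A (shift x p' l d) j * A (shift (shift x p j d) p' l d) k)
       + (A x k * A (shift x p k d) j - Q * (A x k * A (shift (shift x p k d) p' l d) j)
           + A (shift x p' l d) k * A (shift (shift x p k d) p' l d) j) = 0"
proof (cases "j = k")
  case True
  define aj where "aj = gam N gN x p j"
  define b where "b = gam N gN x p' l"
  have f1: "A x j = NRl N gN T d p p' x j l * sinh (T * (aj - b + d/2)) / Dl N gN T p x j"
    unfolding A_def aj_def b_def using l by (rule A_form_diag)
  have f2: "A (shift x p j d) j = NRl N gN T d p p' (shift x p j d) j l * sinh (T * (aj + d - b + d/2)) / Dl N gN T p (shift x p j d) j"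
    unfolding A_def aj_def b_def using l pN pp by (simp add: A_form_diag gam_shift_same gam_shift_other)
  have f3: "A (shift (shift x p j d) p' l d) j = NRl N gN T d p p' (shift x p j d) j l * sinh (T * (aj + d - (b + d) + d/2)) / Dl N gN T p (shift x p j d) j"
    unfolding A_def aj_def b_def using l pN pp
    by (simp add: A_form_diag gam_shift_same gam_shift_other NRl_shift Dl_shift)
  have f4: "A (shift x p' l d) j = NRl N gN T d p p' x j l * sinh (T * (aj - (b + d) + d/2)) / Dl N gN T p x j"
    unfolding A_def aj_def b_def using l pN pp
    by (simp add: A_form_diag gam_shift_same gam_shift_other NRl_shift Dl_shift)
  have "A x j * A (shift x p j d) j - Q * (A x j * A (shift (shift x p j d) p' l d) j)
           + A (shift x p' l d) j * A (shift (shift x p j d) p' l d) j = 0"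
    unfolding f1 f2 f3 f4 by (rule core_diag_I[OF Q])
  then show ?thesis using True by simp
next
  case False
  define aj where "aj = gam N gN x p j"
  define ak where "ak = gam N gN x p k"
  define b where "b = gam N gN x p' l"
  note simps = A_form gam_shift_same gam_shift_other NRl_shift DRl_shift
  have kj: "k \<noteq> j" using False by simp
  have f1: "A x j = NRl N gN T d p p' x j l * sinh (T*(aj - b + d/2)) / (DRl N gN T p x j k * sinh (T*(aj - ak)))"
    unfolding A_def aj_def ak_def b_def using l pN pp jk kj by (simp add: simps)
  have f2: "A (shift x p j d) k = NRl N gN T d p p' x k l * sinh (T*(ak - b + d/2)) / (DRl N gN T p x k j * sinh (T*(ak - (aj + d))))"
    unfolding A_def aj_def ak_def b_def using l pN pp jk kj by (simp add: simps)
  have f3: "A (shift (shift x p j d) p' l d) k = NRl N gN T d p p' x k l * sinh (T*(ak - (b + d) + d/2)) / (DRl N gN T p x k j * sinh (T*(ak - (aj + d))))"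
    unfolding A_def aj_def ak_def b_def using l pN pp jk kj by (simp add: simps)
  have f4: "A (shift x p' l d) j = NRl N gN T d p p' x j l * sinh (T*(aj - (b + d) + d/2)) / (DRl N gN T p x j k * sinh (T*(aj - ak)))"
    unfolding A_def aj_def ak_def b_def using l pN pp jk kj by (simp add: simps)
  have f5: "A x k = NRl N gN T d p p' x k l * sinh (T*(ak - b + d/2)) / (DRl N gN T p x k j * sinh (T*(ak - aj)))"
    unfolding A_def aj_def ak_def b_def using l pN pp jk kj by (simp add: simps)
  have f6: "A (shift x p k d) j = NRl N gN T d p p' x j l * sinh (T*(aj - b + d/2)) / (DRl N gN T p x j k * sinh (T*(aj - (ak + d))))"
    unfolding A_def aj_def ak_def b_def using l pN pp jk kj by (simp add: simps)
  have f7: "A (shift (shift x p k d) p' l d) j = NRl N gN T d p p' x j l * sinh (T*(aj - (b + d) + d/2)) / (DRl N gN T p x j k * sinh (T*(aj - (ak + d))))"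
    unfolding A_def aj_def ak_def b_def using l pN pp jk kj by (simp add: simps)
  have f8: "A (shift x p' l d) k = NRl N gN T d p p' x k l * sinh (T*(ak - (b + d) + d/2)) / (DRl N gN T p x k j * sinh (T*(ak - aj)))"
    unfolding A_def aj_def ak_def b_def using l pN pp jk kj by (simp add: simps)
  have nzd: "DRl N gN T p x j k \<noteq> 0" "DRl N gN T p x k j \<noteq> 0"
    using g1 jk by (auto intro!: DRl_nz)
  show ?thesis unfolding f1 f2 f3 f4 f5 f6 f7 f8
    apply (rule core_I[OF _ _ _ nzd Q])
    using g1[OF jk False] g2[OF jk False] g2[of k j] jk False unfolding aj_def ak_def by auto
qed

lemma serre_I:
  fixes x :: point
  assumes pN: "p \<noteq> N" "p' \<noteq> N" and pp: "p \<noteq> p'" "p' \<noteq> p" "p'' \<noteq> p" "p \<noteq> p''" "p'' \<noteq> p'" "p' \<noteq> p''"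
    and Q: "Q = exp (T*d) + exp (-(T*d))"
    and g1: "\<And>j k. j \<in> {1..p} \<Longrightarrow> k \<in> {1..p} \<Longrightarrow> j \<noteq> k \<Longrightarrow> sinh (T*(gam N gN x p j - gam N gN x p k)) \<noteq> 0"
    and g2: "\<And>j k. j \<in> {1..p} \<Longrightarrow> k \<in> {1..p} \<Longrightarrow> j \<noteq> k \<Longrightarrow> sinh (T*(gam N gN x p j - (gam N gN x p k + d))) \<noteq> 0"
  shows "Gop N gN T d C p p' (Gop N gN T d C p p' (Gop N gN T d C' p' p'' f)) x
       - Q * Gop N gN T d C p p' (Gop N gN T d C' p' p'' (Gop N gN T d C p p' f)) x
       + Gop N gN T d C' p' p'' (Gop N gN T d C p p' (Gop N gN T d C p p' f)) x = 0"
proof -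
  define A where "A = gco N gN T d p p'"
  define B where "B = gco N gN T d p' p''"
  define P where "P j k l = shift (shift (shift x p j d) p k d) p' l d" for j k l
  define H where "H j k l = A x j * A (shift x p j d) k - Q * (A x j * A (shift (shift x p j d) p' l d) k)
           + A (shift x p' l d) j * A (shift (shift x p j d) p' l d) k" for j k l
  have Bi: "B (shift y p i e) l = B y l" for y i e l
    unfolding B_def using pp by (simp add: gco_shift_indep)
  have 1: "Gop N gN T d C p p' (Gop N gN T d C p p' (Gop N gN T d C' p' p'' f)) x =
     (\<Sum>j=1..p. \<Sum>k=1..p. \<Sum>l=1..p'. C*C*C' * (A x j * A (shift x p j d) k * B x l) * f (P j k l))"
    unfolding Gop_def P_def A_def[symmetric] B_def[symmetric] Bi
    by (simp add: sum_distrib_left mult_ac)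
  have 2: "Gop N gN T d C p p' (Gop N gN T d C' p' p'' (Gop N gN T d C p p' f)) x =
     (\<Sum>j=1..p. \<Sum>k=1..p. \<Sum>l=1..p'. C*C*C' * (A x j * B x l * A (shift (shift x p j d) p' l d) k) * f (P j k l))"
  proof -
    have "Gop N gN T d C p p' (Gop N gN T d C' p' p'' (Gop N gN T d C p p' f)) x =
     (\<Sum>j=1..p. \<Sum>l=1..p'. \<Sum>k=1..p. C*C*C' * (A x j * B x l * A (shift (shift x p j d) p' l d) k) * f (P j k l))"
      unfolding Gop_def P_def A_def[symmetric] B_def[symmetric] Bi
      by (simp add: sum_distrib_left mult_ac shift_comm[of "shift x p j d" p' l d p k d for j l k])
    also have "\<dots> = (\<Sum>j=1..p. \<Sum>k=1..p. \<Sum>l=1..p'. C*C*C' * (A x j * B x l * A (shift (shift x p j d) p' l d) k) * f (P j k l))"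
      by (rule sum.cong[OF refl], rule sum.swap)
    finally show ?thesis .
  qed
  have 3: "Gop N gN T d C' p' p'' (Gop N gN T d C p p' (Gop N gN T d C p p' f)) x =
     (\<Sum>j=1..p. \<Sum>k=1..p. \<Sum>l=1..p'. C*C*C' * (B x l * A (shift x p' l d) j * A (shift (shift x p j d) p' l d) k) * f (P j k l))"
  proof -
    have "Gop N gN T d C' p' p'' (Gop N gN T d C p p' (Gop N gN T d C p p' f)) x =
     (\<Sum>l=1..p'. \<Sum>j=1..p. \<Sum>k=1..p. C*C*C' * (B x l * A (shift x p' l d) j * A (shift (shift x p j d) p' l d) k) * f (P j k l))"
      unfolding Gop_def P_def A_def[symmetric] B_def[symmetric]
      by (simp add: sum_distrib_left mult_ac shift_comm[of x p' l d p j d for j l]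
            shift_comm[of "shift x p j d" p' l d p k d for j l k])
    also have "\<dots> = (\<Sum>j=1..p. \<Sum>l=1..p'. \<Sum>k=1..p. C*C*C' * (B x l * A (shift x p' l d) j * A (shift (shift x p j d) p' l d) k) * f (P j k l))"
      by (rule sum.swap)
    also have "\<dots> = (\<Sum>j=1..p. \<Sum>k=1..p. \<Sum>l=1..p'. C*C*C' * (B x l * A (shift x p' l d) j * A (shift (shift x p j d) p' l d) k) * f (P j k l))"
      by (rule sum.cong[OF refl], rule sum.swap)
    finally show ?thesis .
  qed
  define g where "g j k = (\<Sum>l=1..p'. C*C*C' * B x l * H j k l * f (P j k l))" for j k
  have comb: "Gop N gN T d C p p' (Gop N gN T d C p p' (Gop N gN T d C' p' p'' f)) x
       - Q * Gop N gN T d C p p' (Gop N gN T d C' p' p'' (Gop N gN T d C p p' f)) x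
       + Gop N gN T d C' p' p'' (Gop N gN T d C p p' (Gop N gN T d C p p' f)) x
       = (\<Sum>j=1..p. \<Sum>k=1..p. g j k)"
    unfolding 1 2 3 g_def H_def
    by (simp add: sum_distrib_left sum_subtractf[symmetric] sum.distrib[symmetric] algebra_simps)
  have Psym: "P k j l = P j k l" for j k l
    unfolding P_def by (simp add: shift_comm[of x p k d p j d])
  have "(\<Sum>j=1..p. \<Sum>k=1..p. g j k) = 0"
  proof (rule sum_antisym)
    fix j k assume jk: "j \<in> {1..p}" "k \<in> {1..p}"
    have "g j k + g k j = (\<Sum>l=1..p'. C*C*C' * B x l * (H j k l + H k j l) * f (P j k l))"
      unfolding g_def Psym[of j k] by (simp add: sum.distrib[symmetric] algebra_simps)
    also have "\<dots> = 0"
    proof (intro sum.neutral ballI)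
      fix l assume l: "l \<in> {1..p'}"
      have "H j k l + H k j l = 0"
        unfolding H_def A_def
        by (rule serre_I_local[OF pN(1,2) pp(1,2) Q g1 g2 jk l]) auto
      then show "C*C*C' * B x l * (H j k l + H k j l) * f (P j k l) = 0" by simp
    qed
    finally show "g j k + g k j = 0" .
  qed simp
  then show ?thesis using comb by simp
qed

lemma NR2_comm: "NR2 N gN T d p p' y j l m = NR2 N gN T d p p' y j m l"
  unfolding NR2_def by (simp add: Diff_insert2[symmetric] insert_commute)

lemma A_form2:
  assumes "l \<in> {1..p'}" "m \<in> {1..p'}" "m \<noteq> l"
  shows "gco N gN T d p p' y j = (NR2 N gN T d p p' y j l m * sinh (T * (gam N gN y p j - gam N gN y p' m + d/2)))
      * sinh (T * (gam N gN y p j - gam N gN y p' l + d/2)) / Dl N gN T p y j"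
  unfolding gco_Nm_Dl using assms by (simp add: Nm_split NRl_split)

lemma B_form:
  assumes "m \<in> {1..p}" "m \<noteq> l"
  shows "gco N gN T d p p' y l = Nm N gN T d p p' y l / (DRl N gN T p y l m * sinh (T * (gam N gN y p l - gam N gN y p m)))"
  unfolding gco_Nm_Dl using assms by (simp add: Dl_split)

lemma serre_II_local:
  fixes x :: point
  assumes pN: "p \<noteq> N" "p' \<noteq> N" and pp: "p \<noteq> p'" "p' \<noteq> p" "p'' \<noteq> p'" "p' \<noteq> p''"
    and Q: "Q = exp (T*d) + exp (-(T*d))"
    and g0: "\<And>j k. j \<in> {1..p} \<Longrightarrow> k \<in> {1..p} \<Longrightarrow> j \<noteq> k \<Longrightarrow> sinh (T*(gam N gN x p j - gam N gN x p k)) \<noteq> 0"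
    and g1: "\<And>j k. j \<in> {1..p'} \<Longrightarrow> k \<in> {1..p'} \<Longrightarrow> j \<noteq> k \<Longrightarrow> sinh (T*(gam N gN x p' j - gam N gN x p' k)) \<noteq> 0"
    and g2: "\<And>j k. j \<in> {1..p'} \<Longrightarrow> k \<in> {1..p'} \<Longrightarrow> j \<noteq> k \<Longrightarrow> sinh (T*(gam N gN x p' j - (gam N gN x p' k + d))) \<noteq> 0"
    and lm: "l \<in> {1..p'}" "m \<in> {1..p'}" and j: "j \<in> {1..p}"
  defines "A \<equiv> gco N gN T d p p'" and "B \<equiv> gco N gN T d p' p''"
  shows "B x l * B (shift x p' l d) m * (A (shift (shift x p' l d) p' m d) j - Q * A (shift x p' l d) j + A x j)
       + B x m * B (shift x p' m d) l * (A (shift (shift x p' m d) p' l d) j - Q * A (shift x p' m d) j + A x j) = 0"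
proof (cases "l = m")
  case True
  define aj where "aj = gam N gN x p j"
  define bl where "bl = gam N gN x p' l"
  note simps = A_form_diag gam_shift_same gam_shift_other NRl_shift Dl_shift
  have f1: "A (shift (shift x p' l d) p' l d) j = NRl N gN T d p p' x j l * sinh (T * (aj - (bl + d + d) + d/2)) / Dl N gN T p x j"
    unfolding A_def aj_def bl_def using lm pN pp by (simp add: simps)
  have f2: "A (shift x p' l d) j = NRl N gN T d p p' x j l * sinh (T * (aj - (bl + d) + d/2)) / Dl N gN T p x j"
    unfolding A_def aj_def bl_def using lm pN pp by (simp add: simps)
  have f3: "A x j = NRl N gN T d p p' x j l * sinh (T * (aj - bl + d/2)) / Dl N gN T p x j"
    unfolding A_def aj_def bl_def using lm pN pp by (simp add: simps)
  have "A (shift (shift x p' l d) p' l d) j - Q * A (shift x p' l d) j + A x j = 0"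
    unfolding f1 f2 f3 by (rule core_diag_II[OF Q])
  then show ?thesis using True by simp
next
  case False
  define aj where "aj = gam N gN x p j"
  define bl where "bl = gam N gN x p' l"
  define bm where "bm = gam N gN x p' m"
  have ml: "m \<noteq> l" "l \<noteq> m" using False by auto
  note simps = A_form2 B_form gam_shift_same gam_shift_other NR2_shift Dl_shift Nm_shift DRl_shift
  have f1: "B x l = Nm N gN T d p' p'' x l / (DRl N gN T p' x l m * sinh (T * (bl - bm)))"
    unfolding B_def bl_def bm_def using lm ml pN pp by (simp add: simps)
  have f2: "B (shift x p' l d) m = Nm N gN T d p' p'' x m / (DRl N gN T p' x m l * sinh (T * (bm - (bl + d))))"
    unfolding B_def bl_def bm_def using lm ml pN pp by (simp add: simps)
  have f3: "B x m = Nm N gN T d p' p'' x m / (DRl N gN T p' x m l * sinh (T * (bm - bl)))"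
    unfolding B_def bl_def bm_def using lm ml pN pp by (simp add: simps)
  have f4: "B (shift x p' m d) l = Nm N gN T d p' p'' x l / (DRl N gN T p' x l m * sinh (T * (bl - (bm + d))))"
    unfolding B_def bl_def bm_def using lm ml pN pp by (simp add: simps)
  have f5: "A (shift (shift x p' l d) p' m d) j = (NR2 N gN T d p p' x j l m * sinh (T*(aj - (bm + d) + d/2))) * sinh (T*(aj - (bl + d) + d/2)) / Dl N gN T p x j"
    unfolding A_def aj_def bl_def bm_def using lm ml pN pp by (simp add: simps)
  have f6: "A (shift x p' l d) j = (NR2 N gN T d p p' x j l m * sinh (T*(aj - bm + d/2))) * sinh (T*(aj - (bl + d) + d/2)) / Dl N gN T p x j"
    unfolding A_def aj_def bl_def bm_def using lm ml pN pp by (simp add: simps)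
  have f7: "A x j = (NR2 N gN T d p p' x j l m * sinh (T*(aj - bm + d/2))) * sinh (T*(aj - bl + d/2)) / Dl N gN T p x j"
    unfolding A_def aj_def bl_def bm_def using lm ml pN pp by (simp add: simps)
  have f8: "A (shift (shift x p' m d) p' l d) j = (NR2 N gN T d p p' x j l m * sinh (T*(aj - (bm + d) + d/2))) * sinh (T*(aj - (bl + d) + d/2)) / Dl N gN T p x j"
    unfolding A_def aj_def bl_def bm_def using lm ml pN pp by (simp add: simps)
  have f9: "A (shift x p' m d) j = (NR2 N gN T d p p' x j l m * sinh (T*(aj - (bm + d) + d/2))) * sinh (T*(aj - bl + d/2)) / Dl N gN T p x j"
    unfolding A_def aj_def bl_def bm_def using lm ml pN pp by (simp add: simps)
  have nzd: "DRl N gN T p' x l m \<noteq> 0" "DRl N gN T p' x m l \<noteq> 0" "Dl N gN T p x j \<noteq> 0"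
    using g1 g0 lm j by (auto intro!: DRl_nz Dl_nz)
  show ?thesis unfolding f1 f2 f3 f4 f5 f6 f7 f8 f9
    apply (rule core_II[OF _ _ _ nzd Q])
    using g1[OF lm] g2[OF lm] g2[of m l] lm ml unfolding bl_def bm_def by auto
qed

lemma serre_II:
  fixes x :: point
  assumes pN: "p \<noteq> N" "p' \<noteq> N" and pp: "p \<noteq> p'" "p' \<noteq> p" "p'' \<noteq> p" "p \<noteq> p''" "p'' \<noteq> p'" "p' \<noteq> p''"
    and Q: "Q = exp (T*d) + exp (-(T*d))"
    and g0: "\<And>j k. j \<in> {1..p} \<Longrightarrow> k \<in> {1..p} \<Longrightarrow> j \<noteq> k \<Longrightarrow> sinh (T*(gam N gN x p j - gam N gN x p k)) \<noteq> 0"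
    and g1: "\<And>j k. j \<in> {1..p'} \<Longrightarrow> k \<in> {1..p'} \<Longrightarrow> j \<noteq> k \<Longrightarrow> sinh (T*(gam N gN x p' j - gam N gN x p' k)) \<noteq> 0"
    and g2: "\<And>j k. j \<in> {1..p'} \<Longrightarrow> k \<in> {1..p'} \<Longrightarrow> j \<noteq> k \<Longrightarrow> sinh (T*(gam N gN x p' j - (gam N gN x p' k + d))) \<noteq> 0"
  shows "Gop N gN T d C' p' p'' (Gop N gN T d C' p' p'' (Gop N gN T d C p p' f)) x
       - Q * Gop N gN T d C' p' p'' (Gop N gN T d C p p' (Gop N gN T d C' p' p'' f)) x
       + Gop N gN T d C p p' (Gop N gN T d C' p' p'' (Gop N gN T d C' p' p'' f)) x = 0"
proof -
  define A where "A = gco N gN T d p p'"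
  define B where "B = gco N gN T d p' p''"
  define P where "P l m j = shift (shift (shift x p' l d) p' m d) p j d" for l m j
  define K where "K l m j = B x l * B (shift x p' l d) m * (A (shift (shift x p' l d) p' m d) j - Q * A (shift x p' l d) j + A x j)" for l m j
  have Bi: "B (shift y p i e) l = B y l" for y i e l
    unfolding B_def using pp by (simp add: gco_shift_indep)
  have 1: "Gop N gN T d C' p' p'' (Gop N gN T d C' p' p'' (Gop N gN T d C p p' f)) x =
     (\<Sum>l=1..p'. \<Sum>m=1..p'. \<Sum>j=1..p. C*C'*C' * (B x l * B (shift x p' l d) m * A (shift (shift x p' l d) p' m d) j) * f (P l m j))"
    unfolding Gop_def P_def A_def[symmetric] B_def[symmetric]
    by (simp add: sum_distrib_left mult_ac)
  have 2: "Gop N gN T d C' p' p'' (Gop N gN T d C p p' (Gop N gN T d C' p' p'' f)) x =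
     (\<Sum>l=1..p'. \<Sum>m=1..p'. \<Sum>j=1..p. C*C'*C' * (B x l * B (shift x p' l d) m * A (shift x p' l d) j) * f (P l m j))"
  proof -
    have "Gop N gN T d C' p' p'' (Gop N gN T d C p p' (Gop N gN T d C' p' p'' f)) x =
     (\<Sum>l=1..p'. \<Sum>j=1..p. \<Sum>m=1..p'. C*C'*C' * (B x l * B (shift x p' l d) m * A (shift x p' l d) j) * f (P l m j))"
      unfolding Gop_def P_def A_def[symmetric] B_def[symmetric] Bi
      by (simp add: sum_distrib_left mult_ac shift_comm[of "shift x p' l d" p j d p' m d for j l m])
    also have "\<dots> = (\<Sum>l=1..p'. \<Sum>m=1..p'. \<Sum>j=1..p. C*C'*C' * (B x l * B (shift x p' l d) m * A (shift x p' l d) j) * f (P l m j))"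
      by (rule sum.cong[OF refl], rule sum.swap)
    finally show ?thesis .
  qed
  have 3: "Gop N gN T d C p p' (Gop N gN T d C' p' p'' (Gop N gN T d C' p' p'' f)) x =
     (\<Sum>l=1..p'. \<Sum>m=1..p'. \<Sum>j=1..p. C*C'*C' * (B x l * B (shift x p' l d) m * A x j) * f (P l m j))"
  proof -
    have e1: "shift (shift x p j d) p' l d = shift (shift x p' l d) p j d" for j l
      by (rule shift_comm)
    have e2: "shift (shift (shift x p' l d) p j d) p' m d = shift (shift (shift x p' l d) p' m d) p j d" for j l m
      by (rule shift_comm)
    have "Gop N gN T d C p p' (Gop N gN T d C' p' p'' (Gop N gN T d C' p' p'' f)) x =
     (\<Sum>j=1..p. \<Sum>l=1..p'. \<Sum>m=1..p'. C*C'*C' * (B x l * B (shift x p' l d) m * A x j) * f (P l m j))"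
      unfolding Gop_def P_def A_def[symmetric] B_def[symmetric] e1 e2 Bi
      by (simp add: sum_distrib_left mult_ac)
    also have "\<dots> = (\<Sum>l=1..p'. \<Sum>j=1..p. \<Sum>m=1..p'. C*C'*C' * (B x l * B (shift x p' l d) m * A x j) * f (P l m j))"
      by (rule sum.swap)
    also have "\<dots> = (\<Sum>l=1..p'. \<Sum>m=1..p'. \<Sum>j=1..p. C*C'*C' * (B x l * B (shift x p' l d) m * A x j) * f (P l m j))"
      by (rule sum.cong[OF refl], rule sum.swap)
    finally show ?thesis .
  qed
  define g where "g l m = (\<Sum>j=1..p. C*C'*C' * K l m j * f (P l m j))" for l m
  have comb: "Gop N gN T d C' p' p'' (Gop N gN T d C' p' p'' (Gop N gN T d C p p' f)) x
       - Q * Gop N gN T d C' p' p'' (Gop N gN T d C p p' (Gop N gN T d C' p' p'' f)) x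
       + Gop N gN T d C p p' (Gop N gN T d C' p' p'' (Gop N gN T d C' p' p'' f)) x
       = (\<Sum>l=1..p'. \<Sum>m=1..p'. g l m)"
    unfolding 1 2 3 g_def K_def
    by (simp add: sum_distrib_left sum_subtractf[symmetric] sum.distrib[symmetric] algebra_simps)
  have Psym: "P m l j = P l m j" for l m j
    unfolding P_def by (simp add: shift_comm[of x p' m d p' l d])
  have "(\<Sum>l=1..p'. \<Sum>m=1..p'. g l m) = 0"
  proof (rule sum_antisym)
    fix l m assume lm: "l \<in> {1..p'}" "m \<in> {1..p'}"
    have "g l m + g m l = (\<Sum>j=1..p. C*C'*C' * (K l m j + K m l j) * f (P l m j))"
      unfolding g_def Psym[of m l] by (simp add: sum.distrib[symmetric] algebra_simps)
    also have "\<dots> = 0"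
    proof (intro sum.neutral ballI)
      fix j assume j: "j \<in> {1..p}"
      have "K l m j + K m l j = 0"
        unfolding K_def A_def B_def
        by (rule serre_II_local[OF pN(1,2) pp(1,2,5,6)[unfolded] Q g0 g1 g2 lm j]) 
      then show "C*C'*C' * (K l m j + K m l j) * f (P l m j) = 0" by simp
    qed
    finally show "g l m + g m l = 0" .
  qed simp
  then show ?thesis using comb by simp
qed

lemma sum_plus:
  fixes g :: "'a + 'b \<Rightarrow> 'c::comm_monoid_add"
  assumes "finite A" "finite B"
  shows "(\<Sum>i\<in>Inl ` A \<union> Inr ` B. g i) = (\<Sum>a\<in>A. g (Inl a)) + (\<Sum>b\<in>B. g (Inr b))"
proof -
  have "(\<Sum>i\<in>Inl ` A \<union> Inr ` B. g i) = (\<Sum>i\<in>Inl ` A. g i) + (\<Sum>i\<in>Inr ` B. g i)"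
    by (rule sum.union_disjoint) (use assms in auto)
  also have "\<dots> = (\<Sum>a\<in>A. g (Inl a)) + (\<Sum>b\<in>B. g (Inr b))"
    by (simp add: sum.reindex)
  finally show ?thesis .
qed

lemma prod_plus:
  fixes g :: "'a + 'b \<Rightarrow> 'c::comm_monoid_mult"
  assumes "finite A" "finite B"
  shows "(\<Prod>i\<in>Inl ` A \<union> Inr ` B. g i) = (\<Prod>a\<in>A. g (Inl a)) * (\<Prod>b\<in>B. g (Inr b))"
proof -
  have "(\<Prod>i\<in>Inl ` A \<union> Inr ` B. g i) = (\<Prod>i\<in>Inl ` A. g i) * (\<Prod>i\<in>Inr ` B. g i)"
    by (rule prod.union_disjoint) (use assms in auto)
  also have "\<dots> = (\<Prod>a\<in>A. g (Inl a)) * (\<Prod>b\<in>B. g (Inr b))"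
    by (simp add: prod.reindex)
  finally show ?thesis .
qed

lemma card_plus:
  assumes "finite A" "finite B"
  shows "card (Inl ` A \<union> Inr ` B) = card A + card B"
proof -
  have "card (Inl ` A \<union> Inr ` B) = card (Inl ` A :: ('a + 'b) set) + card (Inr ` B :: ('a + 'b) set)"
  proof -
    have "Inl ` A \<inter> (Inr ` B :: ('a + 'b) set) = {}" by auto
    then show ?thesis using card_Un_disjoint[of "Inl ` A" "Inr ` B"] assms by auto
  qed
  then show ?thesis by (simp add: card_image)
qed

lemma partial_EF:
  fixes a b c :: "nat \<Rightarrow> complex" and T d :: complex
  assumes pp: "p' + p'' = 2 * p"
    and g1: "\<And>j k. j \<in> {1..p} \<Longrightarrow> k \<in> {1..p} \<Longrightarrow> j \<noteq> k \<Longrightarrow> sinh (T*(a j - a k)) \<noteq> 0"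
    and g2: "\<And>j k. j \<in> {1..p} \<Longrightarrow> k \<in> {1..p} \<Longrightarrow> j \<noteq> k \<Longrightarrow> sinh (T*(a j - (a k + d))) \<noteq> 0"
    and g3: "sinh (T*d) \<noteq> 0"
  shows "(\<Sum>j\<in>{1..p}.
      ((\<Prod>r\<in>{1..p'}. sinh (T*(a j - b r + d/2))) / (\<Prod>s\<in>{1..p}-{j}. sinh (T*(a j - a s))))
       * ((\<Prod>r\<in>{1..p''}. sinh (T*(a j + d - c r + - d/2))) / (\<Prod>s\<in>{1..p}-{j}. sinh (T*(a j + d - a s))))
    - ((\<Prod>r\<in>{1..p''}. sinh (T*(a j - c r + - d/2))) / (\<Prod>s\<in>{1..p}-{j}. sinh (T*(a j - a s))))
       * ((\<Prod>r\<in>{1..p'}. sinh (T*(a j + - d - b r + d/2))) / (\<Prod>s\<in>{1..p}-{j}. sinh (T*(a j + - d - a s)))))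
    = sinh (T*d) * sinh (T * (2 * sum a {1..p} - sum b {1..p'} - sum c {1..p''}))"
proof -
  define P where "P = {1..p}"
  define I where "I = Inl ` P \<union> Inr ` P"
  define J where "J = Inl ` {1..p'} \<union> Inr ` {1..p''}"
  define U where "U = case_sum (\<lambda>j. T * a j) (\<lambda>j. T * a j - T * d)"
  define V where "V = case_sum (\<lambda>r. T * b r - T * d/2) (\<lambda>r. T * c r - T * d/2)"
  have finP: "finite P" unfolding P_def by simp
  have g2': "sinh (T*(a j - (a k - d))) \<noteq> 0" if "j \<in> P" "k \<in> P" "j \<noteq> k" for j k
  proof -
    have "T*(a j - (a k - d)) = - (T*(a k - (a j + d)))" by (simp add: algebra_simps)
    then show ?thesis using g2[of k j] that unfolding P_def by simp
  qed
  have distinct: "sinh (U i - U k) \<noteq> 0" if "i \<in> I" "k \<in> I" "i \<noteq> k" for i k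
  proof -
    from that(1) obtain j where j: "j \<in> P" "i = Inl j \<or> i = Inr j" unfolding I_def by auto
    from that(2) obtain m where m: "m \<in> P" "k = Inl m \<or> k = Inr m" unfolding I_def by auto
    have e1: "T * a j - (T * a k - T * d) = T*(a j - (a k - d))" for j k by (simp add: algebra_simps)
    have e2: "T * a j - T * d - T * a k = T*(a j - (a k + d))" for j k by (simp add: algebra_simps)
    have e3: "T * a j - T * d - (T * a k - T * d) = T*(a j - a k)" for j k by (simp add: algebra_simps)
    have e4: "T * a j - T * a k = T*(a j - a k)" for j k by (simp add: algebra_simps)
    have e5: "T * a j - (T * a j - T * d) = T * d" "T * a j - T * d - T * a j = - (T * d)" for j
      by (simp_all add: algebra_simps)
    show ?thesis
    proof (cases "j = m")
      case True
      then show ?thesis using j m that(3) g3 unfolding U_def by (auto simp: e5)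
    next
      case False
      then show ?thesis using j m g1[of j m] g2[of j m] g2'[of j m] unfolding U_def P_def
        by (auto simp: e1 e2 e3 e4)
    qed
  qed
  have cardIJ: "card I = card J"
    unfolding I_def J_def using pp by (simp add: card_plus P_def)
  have L: "(\<Sum>i\<in>I. (\<Prod>r\<in>J. sinh (U i - V r)) / (\<Prod>k\<in>I-{i}. sinh (U i - U k)))
           = sinh (sum U I - sum V J)"
    by (rule sinh_partial) (use distinct cardIJ in \<open>auto simp: I_def J_def finP\<close>)
  have FL: "(\<Prod>r\<in>J. sinh (U (Inl j) - V r)) / (\<Prod>k\<in>I-{Inl j}. sinh (U (Inl j) - U k))
     = ((\<Prod>r\<in>{1..p'}. sinh (T*(a j - b r + d/2))) * (\<Prod>r\<in>{1..p''}. sinh (T*(a j + d - c r + - d/2))))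
       / ((\<Prod>s\<in>P-{j}. sinh (T*(a j - a s))) * (sinh (T*d) * (\<Prod>s\<in>P-{j}. sinh (T*(a j + d - a s)))))"
    if j: "j \<in> P" for j
  proof -
    have Ieq: "I - {Inl j} = Inl ` (P - {j}) \<union> Inr ` P" unfolding I_def by auto
    have n: "(\<Prod>r\<in>J. sinh (U (Inl j) - V r)) = (\<Prod>r\<in>{1..p'}. sinh (T*(a j - b r + d/2))) * (\<Prod>r\<in>{1..p''}. sinh (T*(a j + d - c r + - d/2)))"
      unfolding J_def U_def V_def by (simp add: prod_plus algebra_simps)
    have "(\<Prod>s\<in>P. sinh (T * a j - (T * a s - T * d))) = sinh (T * a j - (T * a j - T * d)) * (\<Prod>s\<in>P-{j}. sinh (T * a j - (T * a s - T * d)))"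
      using j finP by (simp add: prod.remove)
    also have "\<dots> = sinh (T*d) * (\<Prod>s\<in>P-{j}. sinh (T*(a j + d - a s)))"
    proof -
      have "T * a j - (T * a j - T * d) = T*d" by simp
      moreover have "(\<Prod>s\<in>P-{j}. sinh (T * a j - (T * a s - T * d))) = (\<Prod>s\<in>P-{j}. sinh (T*(a j + d - a s)))"
        by (rule prod.cong) (simp_all add: algebra_simps)
      ultimately show ?thesis by (simp only:)
    qed
    finally have d2: "(\<Prod>s\<in>P. sinh (T * a j - (T * a s - T * d))) = sinh (T*d) * (\<Prod>s\<in>P-{j}. sinh (T*(a j + d - a s)))" .
    have d1: "(\<Prod>s\<in>P-{j}. sinh (T * a j - T * a s)) = (\<Prod>s\<in>P-{j}. sinh (T*(a j - a s)))"
      by (rule prod.cong) (simp_all add: algebra_simps)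
    have "(\<Prod>k\<in>I-{Inl j}. sinh (U (Inl j) - U k)) = (\<Prod>s\<in>P-{j}. sinh (U (Inl j) - U (Inl s))) * (\<Prod>s\<in>P. sinh (U (Inl j) - U (Inr s)))"
      unfolding Ieq using finP by (simp only: prod_plus finite_Diff)
    also have "\<dots> = (\<Prod>s\<in>P-{j}. sinh (T * a j - T * a s)) * (\<Prod>s\<in>P. sinh (T * a j - (T * a s - T * d)))"
      by (simp only: U_def sum.case)
    finally have dd: "(\<Prod>k\<in>I-{Inl j}. sinh (U (Inl j) - U k)) = (\<Prod>s\<in>P-{j}. sinh (T*(a j - a s))) * (sinh (T*d) * (\<Prod>s\<in>P-{j}. sinh (T*(a j + d - a s))))"
      unfolding d1 d2 .
    show ?thesis unfolding n dd ..
  qed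
  have FR: "(\<Prod>r\<in>J. sinh (U (Inr j) - V r)) / (\<Prod>k\<in>I-{Inr j}. sinh (U (Inr j) - U k))
     = ((\<Prod>r\<in>{1..p'}. sinh (T*(a j + - d - b r + d/2))) * (\<Prod>r\<in>{1..p''}. sinh (T*(a j - c r + - d/2))))
       / ((- sinh (T*d) * (\<Prod>s\<in>P-{j}. sinh (T*(a j + - d - a s)))) * (\<Prod>s\<in>P-{j}. sinh (T*(a j - a s))))"
    if j: "j \<in> P" for j
  proof -
    have Ieq: "I - {Inr j} = Inl ` P \<union> Inr ` (P - {j})" unfolding I_def by auto
    have n: "(\<Prod>r\<in>J. sinh (U (Inr j) - V r)) = (\<Prod>r\<in>{1..p'}. sinh (T*(a j + - d - b r + d/2))) * (\<Prod>r\<in>{1..p''}. sinh (T*(a j - c r + - d/2)))"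
      unfolding J_def U_def V_def by (simp add: prod_plus algebra_simps)
    have "(\<Prod>s\<in>P. sinh (T * a j - T * d - T * a s)) = sinh (T * a j - T * d - T * a j) * (\<Prod>s\<in>P-{j}. sinh (T * a j - T * d - T * a s))"
      using j finP by (simp add: prod.remove)
    also have "\<dots> = - sinh (T*d) * (\<Prod>s\<in>P-{j}. sinh (T*(a j + - d - a s)))"
    proof -
      have "sinh (T * a j - T * d - T * a j) = - sinh (T*d)" by simp
      moreover have "(\<Prod>s\<in>P-{j}. sinh (T * a j - T * d - T * a s)) = (\<Prod>s\<in>P-{j}. sinh (T*(a j + - d - a s)))"
        by (rule prod.cong) (simp_all add: algebra_simps)
      ultimately show ?thesis by (simp only:)
    qed
    finally have d2: "(\<Prod>s\<in>P. sinh (T * a j - T * d - T * a s)) = - sinh (T*d) * (\<Prod>s\<in>P-{j}. sinh (T*(a j + - d - a s)))" .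
    have d1: "(\<Prod>s\<in>P-{j}. sinh (T * a j - T * d - (T * a s - T * d))) = (\<Prod>s\<in>P-{j}. sinh (T*(a j - a s)))"
      by (rule prod.cong) (simp_all add: algebra_simps)
    have "(\<Prod>k\<in>I-{Inr j}. sinh (U (Inr j) - U k)) = (\<Prod>s\<in>P. sinh (U (Inr j) - U (Inl s))) * (\<Prod>s\<in>P-{j}. sinh (U (Inr j) - U (Inr s)))"
      unfolding Ieq using finP by (simp only: prod_plus finite_Diff)
    also have "\<dots> = (\<Prod>s\<in>P. sinh (T * a j - T * d - T * a s)) * (\<Prod>s\<in>P-{j}. sinh (T * a j - T * d - (T * a s - T * d)))"
      by (simp only: U_def sum.case)
    finally have dd: "(\<Prod>k\<in>I-{Inr j}. sinh (U (Inr j) - U k)) = (- sinh (T*d) * (\<Prod>s\<in>P-{j}. sinh (T*(a j + - d - a s)))) * (\<Prod>s\<in>P-{j}. sinh (T*(a j - a s)))"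
      unfolding d1 d2 .
    show ?thesis unfolding n dd ..
  qed
  have sumL: "(\<Sum>i\<in>I. (\<Prod>r\<in>J. sinh (U i - V r)) / (\<Prod>k\<in>I-{i}. sinh (U i - U k)))
     = (\<Sum>j\<in>P. (\<Prod>r\<in>J. sinh (U (Inl j) - V r)) / (\<Prod>k\<in>I-{Inl j}. sinh (U (Inl j) - U k))
                + (\<Prod>r\<in>J. sinh (U (Inr j) - V r)) / (\<Prod>k\<in>I-{Inr j}. sinh (U (Inr j) - U k)))"
    unfolding I_def[of] using finP by (simp add: sum_plus sum.distrib)
  have per: "(\<Prod>r\<in>J. sinh (U (Inl j) - V r)) / (\<Prod>k\<in>I-{Inl j}. sinh (U (Inl j) - U k))
                + (\<Prod>r\<in>J. sinh (U (Inr j) - V r)) / (\<Prod>k\<in>I-{Inr j}. sinh (U (Inr j) - U k))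
     = (((\<Prod>r\<in>{1..p'}. sinh (T*(a j - b r + d/2))) / (\<Prod>s\<in>{1..p}-{j}. sinh (T*(a j - a s))))
       * ((\<Prod>r\<in>{1..p''}. sinh (T*(a j + d - c r + - d/2))) / (\<Prod>s\<in>{1..p}-{j}. sinh (T*(a j + d - a s))))
    - ((\<Prod>r\<in>{1..p''}. sinh (T*(a j - c r + - d/2))) / (\<Prod>s\<in>{1..p}-{j}. sinh (T*(a j - a s))))
       * ((\<Prod>r\<in>{1..p'}. sinh (T*(a j + - d - b r + d/2))) / (\<Prod>s\<in>{1..p}-{j}. sinh (T*(a j + - d - a s))))) / sinh (T*d)"
    if j: "j \<in> P" for j
  proof -
    have gen: "(nb * nc) / (d1 * (sd * d2)) + (nb' * nc') / ((- sd * d3) * d1) = ((nb / d1) * (nc / d2) - (nc' / d1) * (nb' / d3)) / sd"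
      for nb nc nb' nc' d1 d2 d3 sd :: complex
      by (simp add: divide_inverse inverse_mult_distrib algebra_simps)
    show ?thesis unfolding FL[OF j] FR[OF j] P_def[symmetric] by (rule gen)
  qed
  have sU: "sum U I = 2 * T * sum a P - of_nat (card P) * (T * d)"
    unfolding I_def U_def using finP
    by (simp add: sum_plus sum_subtractf sum_distrib_left[symmetric] algebra_simps)
  have sV: "sum V J = T * sum b {1..p'} + T * sum c {1..p''} - (of_nat p' + of_nat p'') * (T * d / 2)"
    unfolding J_def V_def
    by (simp add: sum_plus sum_subtractf sum_distrib_left[symmetric] algebra_simps)
  have cP: "card P = p" unfolding P_def by simp
  have ppc: "(of_nat p' + of_nat p'' :: complex) = 2 * of_nat p"
    using pp by (metis of_nat_add of_nat_mult of_nat_numeral)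
  have RHS: "sum U I - sum V J = T * (2 * sum a {1..p} - sum b {1..p'} - sum c {1..p''})"
    unfolding sU sV ppc cP P_def by (simp add: algebra_simps)
  have "(\<Sum>j\<in>{1..p}.
      ((\<Prod>r\<in>{1..p'}. sinh (T*(a j - b r + d/2))) / (\<Prod>s\<in>{1..p}-{j}. sinh (T*(a j - a s))))
       * ((\<Prod>r\<in>{1..p''}. sinh (T*(a j + d - c r + - d/2))) / (\<Prod>s\<in>{1..p}-{j}. sinh (T*(a j + d - a s))))
    - ((\<Prod>r\<in>{1..p''}. sinh (T*(a j - c r + - d/2))) / (\<Prod>s\<in>{1..p}-{j}. sinh (T*(a j - a s))))
       * ((\<Prod>r\<in>{1..p'}. sinh (T*(a j + - d - b r + d/2))) / (\<Prod>s\<in>{1..p}-{j}. sinh (T*(a j + - d - a s))))) / sinh (T*d)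
     = sinh (sum U I - sum V J)"
    unfolding L[symmetric] sumL sum_divide_distrib P_def
    by (rule sum.cong[OF refl], rule per[symmetric]) (simp add: P_def)
  then show ?thesis unfolding RHS using g3 by (simp add: field_simps)
qed

lemma EF_adj:
  fixes x :: point
  assumes pN: "p \<noteq> N" "p' \<noteq> N" and pp: "p \<noteq> p'" "p' \<noteq> p"
  shows "Gop N gN T d C p p' (Gop N gN T (- d) C' p' p f) x = Gop N gN T (- d) C' p' p (Gop N gN T d C p p' f) x"
proof -
  define A where "A = gco N gN T d p p'"
  define B where "B = gco N gN T (- d) p' p"
  have loc: "A x j * B (shift x p j d) k = B x k * A (shift x p' k (- d)) j"
    if j: "j \<in> {1..p}" and k: "k \<in> {1..p'}" for j k
  proof -
    define aj where "aj = gam N gN x p j"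
    define bk where "bk = gam N gN x p' k"
    note simps = A_form_diag gam_shift_same gam_shift_other NRl_shift Dl_shift
    have f1: "A x j = NRl N gN T d p p' x j k * sinh (T*(aj - bk + d/2)) / Dl N gN T p x j"
      unfolding A_def aj_def bk_def using j k pN pp by (simp add: simps)
    have f2: "B (shift x p j d) k = NRl N gN T (- d) p' p x k j * sinh (T*(bk - (aj + d) + - d/2)) / Dl N gN T p' x k"
      unfolding B_def aj_def bk_def using j k pN pp by (simp add: simps)
    have f3: "B x k = NRl N gN T (- d) p' p x k j * sinh (T*(bk - aj + - d/2)) / Dl N gN T p' x k"
      unfolding B_def aj_def bk_def using j k pN pp by (simp add: simps)
    have f4: "A (shift x p' k (- d)) j = NRl N gN T d p p' x j k * sinh (T*(aj - (bk + - d) + d/2)) / Dl N gN T p x j"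
      unfolding A_def aj_def bk_def using j k pN pp by (simp add: simps)
    show ?thesis unfolding f1 f2 f3 f4 by (rule core_EF)
  qed
  have "Gop N gN T d C p p' (Gop N gN T (- d) C' p' p f) x =
      (\<Sum>j=1..p. \<Sum>k=1..p'. C * C' * (A x j * B (shift x p j d) k) * f (shift (shift x p j d) p' k (- d)))"
    unfolding Gop_def A_def[symmetric] B_def[symmetric] by (simp add: sum_distrib_left mult_ac)
  also have "\<dots> = (\<Sum>j=1..p. \<Sum>k=1..p'. C * C' * (B x k * A (shift x p' k (- d)) j) * f (shift (shift x p' k (- d)) p j d))"
    by (intro sum.cong refl) (simp add: loc shift_comm[of x p j d p' k "- d" for j k])
  also have "\<dots> = (\<Sum>k=1..p'. \<Sum>j=1..p. C * C' * (B x k * A (shift x p' k (- d)) j) * f (shift (shift x p' k (- d)) p j d))"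
    by (rule sum.swap)
  also have "\<dots> = Gop N gN T (- d) C' p' p (Gop N gN T d C p p' f) x"
    unfolding Gop_def A_def[symmetric] B_def[symmetric] by (simp add: sum_distrib_left mult_ac)
  finally show ?thesis .
qed

lemma gco_shift_own:
  assumes "p \<noteq> N" "p' \<noteq> p"
  shows "gco N gN T d p p' (shift x p j e) j =
    (\<Prod>r\<in>{1..p'}. sinh (T*(gam N gN x p j + e - gam N gN x p' r + d/2))) /
    (\<Prod>s\<in>{1..p}-{j}. sinh (T*(gam N gN x p j + e - gam N gN x p s)))"
  unfolding gco_def using assms
  by (intro arg_cong2[where f="(/)"] prod.cong refl) (auto simp: gam_shift_same gam_shift_other)

lemma EF_same:
  fixes x :: point
  assumes pN: "p \<noteq> N" and pp: "p' \<noteq> p" "p'' \<noteq> p" and card: "p' + p'' = 2 * p"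
    and g1: "\<And>j k. j \<in> {1..p} \<Longrightarrow> k \<in> {1..p} \<Longrightarrow> j \<noteq> k \<Longrightarrow> sinh (T*(gam N gN x p j - gam N gN x p k)) \<noteq> 0"
    and g2: "\<And>j k. j \<in> {1..p} \<Longrightarrow> k \<in> {1..p} \<Longrightarrow> j \<noteq> k \<Longrightarrow> sinh (T*(gam N gN x p j - (gam N gN x p k + d))) \<noteq> 0"
    and g3: "sinh (T*d) \<noteq> 0"
  shows "Gop N gN T d C p p' (Gop N gN T (- d) C' p p'' f) x - Gop N gN T (- d) C' p p'' (Gop N gN T d C p p' f) x
     = C * C' * sinh (T*d) * sinh (T * (2 * sum (gam N gN x p) {1..p} - sum (gam N gN x p') {1..p'} - sum (gam N gN x p'') {1..p''})) * f x"
proof -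
  define A where "A = gco N gN T d p p'"
  define B where "B = gco N gN T (- d) p p''"
  define P where "P j k = shift (shift x p j d) p k (- d)" for j k
  have off: "A x j * B (shift x p j d) k = B x k * A (shift x p k (- d)) j"
    if j: "j \<in> {1..p}" and k: "k \<in> {1..p}" and jk: "j \<noteq> k" for j k
  proof -
    define aj where "aj = gam N gN x p j"
    define ak where "ak = gam N gN x p k"
    have kj: "k \<noteq> j" using jk by simp
    note simps = B_form gam_shift_same gam_shift_other Nm_shift DRl_shift
    have f1: "A x j = Nm N gN T d p p' x j / (DRl N gN T p x j k * sinh (T*(aj - ak)))"
      unfolding A_def aj_def ak_def using j k jk kj pN pp by (simp add: simps)
    have f2: "B (shift x p j d) k = Nm N gN T (- d) p p'' x k / (DRl N gN T p x k j * sinh (T*(ak - (aj + d))))"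
      unfolding B_def aj_def ak_def using j k jk kj pN pp by (simp add: simps)
    have f3: "B x k = Nm N gN T (- d) p p'' x k / (DRl N gN T p x k j * sinh (T*(ak - aj)))"
      unfolding B_def aj_def ak_def using j k jk kj pN pp by (simp add: simps)
    have f4: "A (shift x p k (- d)) j = Nm N gN T d p p' x j / (DRl N gN T p x j k * sinh (T*(aj - (ak + - d))))"
      unfolding A_def aj_def ak_def using j k jk kj pN pp by (simp add: simps)
    show ?thesis unfolding f1 f2 f3 f4 by (rule core_off)
  qed
  have Pjj: "P j j = x" for j unfolding P_def by (rule shift_inv)
  have XY: "Gop N gN T d C p p' (Gop N gN T (- d) C' p p'' f) x =
      (\<Sum>j=1..p. \<Sum>k=1..p. C * C' * (A x j * B (shift x p j d) k) * f (P j k))"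
    unfolding Gop_def A_def[symmetric] B_def[symmetric] P_def by (simp add: sum_distrib_left mult_ac)
  have YX: "Gop N gN T (- d) C' p p'' (Gop N gN T d C p p' f) x =
      (\<Sum>j=1..p. \<Sum>k=1..p. C * C' * (B x k * A (shift x p k (- d)) j) * f (P j k))"
  proof -
    have "Gop N gN T (- d) C' p p'' (Gop N gN T d C p p' f) x =
      (\<Sum>k=1..p. \<Sum>j=1..p. C * C' * (B x k * A (shift x p k (- d)) j) * f (P j k))"
      unfolding Gop_def A_def[symmetric] B_def[symmetric] P_def
      by (simp add: sum_distrib_left mult_ac shift_comm[of x p k "- d" p j d for j k])
    also have "\<dots> = (\<Sum>j=1..p. \<Sum>k=1..p. C * C' * (B x k * A (shift x p k (- d)) j) * f (P j k))"
      by (rule sum.swap)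
    finally show ?thesis .
  qed
  have inner: "(\<Sum>k=1..p. C * C' * (A x j * B (shift x p j d) k) * f (P j k) - C * C' * (B x k * A (shift x p k (- d)) j) * f (P j k))
     = C * C' * (A x j * B (shift x p j d) j - B x j * A (shift x p j (- d)) j) * f x"
    if j: "j \<in> {1..p}" for j
  proof -
    have "(\<Sum>k=1..p. C * C' * (A x j * B (shift x p j d) k) * f (P j k) - C * C' * (B x k * A (shift x p k (- d)) j) * f (P j k))
      = (C * C' * (A x j * B (shift x p j d) j) * f (P j j) - C * C' * (B x j * A (shift x p j (- d)) j) * f (P j j))
        + (\<Sum>k\<in>{1..p}-{j}. C * C' * (A x j * B (shift x p j d) k) * f (P j k) - C * C' * (B x k * A (shift x p k (- d)) j) * f (P j k))"
      using j by (simp add: sum.remove)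
    also have "(\<Sum>k\<in>{1..p}-{j}. C * C' * (A x j * B (shift x p j d) k) * f (P j k) - C * C' * (B x k * A (shift x p k (- d)) j) * f (P j k)) = 0"
      using off j by (intro sum.neutral ballI) auto
    finally show ?thesis unfolding Pjj by (simp add: algebra_simps)
  qed
  define a where "a = gam N gN x p"
  define b where "b = gam N gN x p'"
  define c where "c = gam N gN x p''"
  have T1: "A x j * B (shift x p j d) j =
      ((\<Prod>r\<in>{1..p'}. sinh (T*(a j - b r + d/2))) / (\<Prod>s\<in>{1..p}-{j}. sinh (T*(a j - a s))))
       * ((\<Prod>r\<in>{1..p''}. sinh (T*(a j + d - c r + - d/2))) / (\<Prod>s\<in>{1..p}-{j}. sinh (T*(a j + d - a s))))" for j
    unfolding A_def B_def a_def b_def c_def gco_shift_own[OF pN pp(2)] by (simp add: gco_def)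
  have T2: "B x j * A (shift x p j (- d)) j =
      ((\<Prod>r\<in>{1..p''}. sinh (T*(a j - c r + - d/2))) / (\<Prod>s\<in>{1..p}-{j}. sinh (T*(a j - a s))))
       * ((\<Prod>r\<in>{1..p'}. sinh (T*(a j + - d - b r + d/2))) / (\<Prod>s\<in>{1..p}-{j}. sinh (T*(a j + - d - a s))))" for j
    unfolding A_def B_def a_def b_def c_def gco_shift_own[OF pN pp(1)] by (simp add: gco_def)
  have PE: "(\<Sum>j\<in>{1..p}. A x j * B (shift x p j d) j - B x j * A (shift x p j (- d)) j)
     = sinh (T*d) * sinh (T * (2 * sum a {1..p} - sum b {1..p'} - sum c {1..p''}))"
    unfolding T1 T2 by (rule partial_EF[OF card]) (use g1 g2 g3 in \<open>auto simp: a_def\<close>)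
  have "Gop N gN T d C p p' (Gop N gN T (- d) C' p p'' f) x - Gop N gN T (- d) C' p p'' (Gop N gN T d C p p' f) x
     = (\<Sum>j=1..p. \<Sum>k=1..p. C * C' * (A x j * B (shift x p j d) k) * f (P j k) - C * C' * (B x k * A (shift x p k (- d)) j) * f (P j k))"
    unfolding XY YX by (simp add: sum_subtractf)
  also have "\<dots> = (\<Sum>j=1..p. C * C' * (A x j * B (shift x p j d) j - B x j * A (shift x p j (- d)) j) * f x)"
    by (rule sum.cong[OF refl], rule inner) simp
  also have "\<dots> = C * C' * (\<Sum>j\<in>{1..p}. A x j * B (shift x p j d) j - B x j * A (shift x p j (- d)) j) * f x"
    by (simp add: sum_distrib_left sum_distrib_right mult_ac)
  finally show ?thesis unfolding PE a_def b_def c_def by simp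
qed

lemma sum_gam_shift:
  assumes "m \<noteq> N" "finite A"
  shows "(\<Sum>j'\<in>A. gam N gN (shift x m j e) r j') = (\<Sum>j'\<in>A. gam N gN x r j') + (if r = m \<and> j \<in> A then e else 0)"
proof (cases "r = m \<and> j \<in> A")
  case True
  then have "(\<Sum>j'\<in>A. gam N gN (shift x m j e) r j') = gam N gN (shift x m j e) r j + (\<Sum>j'\<in>A-{j}. gam N gN (shift x m j e) r j')"
    using assms by (simp add: sum.remove)
  also have "\<dots> = (gam N gN x r j + e) + (\<Sum>j'\<in>A-{j}. gam N gN x r j')"
    using True assms by (simp add: gam_shift_same gam_shift_other)
  also have "\<dots> = (\<Sum>j'\<in>A. gam N gN x r j') + e"
  proof -
    have "(\<Sum>j'\<in>A. gam N gN x r j') = gam N gN x r j + (\<Sum>j'\<in>A-{j}. gam N gN x r j')"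
      using True assms by (intro sum.remove) auto
    then show ?thesis by simp
  qed
  finally show ?thesis using True by simp
next
  case False
  then show ?thesis by (auto intro!: sum.cong gam_shift_other)
qed

lemma Kexp_shift:
  assumes "m \<noteq> N" "j \<in> {1..m}" "1 \<le> n"
  shows "Kexp N w2 gN n (shift x m j e) = Kexp N w2 gN n x + 2 * of_real pi / w2 * e * (of_bool (n = m) - of_bool (n = m + 1))"
proof -
  have a: "(n - 1 = m \<and> j \<in> {1..n-1}) = (n = m + 1)" using assms by auto
  have b: "(n = m \<and> j \<in> {1..n}) = (n = m)" using assms by auto
  have s1: "(\<Sum>j'=1..n. gam N gN (shift x m j e) n j') = (\<Sum>j'=1..n. gam N gN x n j') + (if n = m then e else 0)"
    using sum_gam_shift[OF assms(1), of "{1..n}" gN x j e n] b by simp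
  have s2: "(\<Sum>j'=1..n-1. gam N gN (shift x m j e) (n-1) j') = (\<Sum>j'=1..n-1. gam N gN x (n-1) j') + (if n = m + 1 then e else 0)"
    using sum_gam_shift[OF assms(1), of "{1..n-1}" gN x j e "n-1"] a by simp
  have nn: "\<not> (n = m \<and> n = m + 1)" by auto
  show ?thesis unfolding Kexp_def s1 s2 using nn
    by (cases "n = m"; cases "n = m + 1") (simp_all add: algebra_simps)
qed

lemma sinh_mi: "sinh (- (\<i> * y)) = - \<i> * sin y"
  by (simp add: sinh_conv_sin)

lemma main_setup:
  fixes N :: nat and w1 w2 :: complex and gN :: "nat \<Rightarrow> complex"
  assumes "w2 \<noteq> 0"
  defines "T \<equiv> 2 * of_real pi / w2" and "dE \<equiv> - \<i> * w1"
  shows Eeq: "Eop N w1 w2 gN n = Gop N gN T dE (2 * \<i> * exp (of_real pi * \<i> * w1 / w2 * (of_nat n - 1)) / sin (2 * of_real pi * w1 / w2)) n (n+1)"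
    and Feq: "Fop N w1 w2 gN n = Gop N gN T (- dE) (- (\<i> * exp (- (of_real pi * \<i> * w1 / w2 * (of_nat n - 1))) / (2 * sin (2 * of_real pi * w1 / w2)))) n (n-1)"
proof -
  show "Eop N w1 w2 gN n = Gop N gN T dE (2 * \<i> * exp (of_real pi * \<i> * w1 / w2 * (of_nat n - 1)) / sin (2 * of_real pi * w1 / w2)) n (n+1)"
    unfolding Eop_def Gop_def gco_def T_def dE_def
    by (intro ext arg_cong2[where f="(*)"] refl sum.cong arg_cong2[where f="(/)"] prod.cong)
       (simp_all add: algebra_simps)
  show "Fop N w1 w2 gN n = Gop N gN T (- dE) (- (\<i> * exp (- (of_real pi * \<i> * w1 / w2 * (of_nat n - 1))) / (2 * sin (2 * of_real pi * w1 / w2)))) n (n-1)"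
    unfolding Fop_def Gop_def gco_def T_def dE_def
    by (intro ext arg_cong2[where f="(*)"] refl sum.cong arg_cong2[where f="(/)"] prod.cong)
       (simp_all add: algebra_simps)
qed

lemma gen_rows:
  fixes N :: nat and w1 w2 :: complex and gN :: "nat \<Rightarrow> complex"
  assumes g: "generic N w1 w2 x" and n: "n \<in> {1..<N}" and jk: "j \<in> {1..n}" "k \<in> {1..n}" "j \<noteq> k"
  defines "T \<equiv> 2 * of_real pi / w2" and "dE \<equiv> - \<i> * w1"
  shows "sinh (T*(gam N gN x n j - gam N gN x n k)) \<noteq> 0"
    and "sinh (T*(gam N gN x n j - (gam N gN x n k + dE))) \<noteq> 0"
    and "sinh (T*(gam N gN x n j - (gam N gN x n k + - dE))) \<noteq> 0"
proof -
  have nN: "n \<noteq> N" using n by auto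
  have gg: "gam N gN x n i = x n i" for i using nN by (simp add: gam_def)
  have H: "sinh (2 * of_real pi / w2 * (x n j - x n k + of_int z * \<i> * w1)) \<noteq> 0" for z :: int
    using g n jk unfolding generic_def by blast
  show "sinh (T*(gam N gN x n j - gam N gN x n k)) \<noteq> 0"
    using H[of 0] unfolding gg T_def by simp
  show "sinh (T*(gam N gN x n j - (gam N gN x n k + dE))) \<noteq> 0"
  proof -
    have "T*(gam N gN x n j - (gam N gN x n k + dE)) = 2 * of_real pi / w2 * (x n j - x n k + of_int 1 * \<i> * w1)"
      unfolding gg T_def dE_def by (simp add: algebra_simps)
    then show ?thesis using H[of 1] by simp
  qed
  show "sinh (T*(gam N gN x n j - (gam N gN x n k + - dE))) \<noteq> 0"
  proof -
    have "T*(gam N gN x n j - (gam N gN x n k + - dE)) = 2 * of_real pi / w2 * (x n j - x n k + of_int (-1) * \<i> * w1)"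
      unfolding gg T_def dE_def by (simp add: algebra_simps)
    then show ?thesis using H[of "-1"] by simp
  qed
qed

lemma const_facts:
  fixes w1 w2 :: complex
  assumes w2: "w2 \<noteq> 0" and S: "sin (2 * of_real pi * w1 / w2) \<noteq> 0"
  defines "T \<equiv> 2 * of_real pi / w2" and "dE \<equiv> - \<i> * w1" and "q \<equiv> exp (2 * of_real pi * \<i> * w1 / w2)"
  shows "sinh (T*dE) = - \<i> * sin (2 * of_real pi * w1 / w2)"
    and "q - inverse q = 2 * \<i> * sin (2 * of_real pi * w1 / w2)"
    and "exp (- (T*dE)) = q" and "exp (T*dE) = inverse q"
    and "q + inverse q = exp (T*dE) + exp (-(T*dE))"
    and "q + inverse q = exp (T*(- dE)) + exp (-(T*(- dE)))"
    and "sinh (T*dE) \<noteq> 0"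
proof -
  have a: "T*dE = - (\<i> * (2 * of_real pi * w1 / w2))" unfolding T_def dE_def by (simp add: algebra_simps)
  have b: "2 * of_real pi * \<i> * w1 / w2 = \<i> * (2 * of_real pi * w1 / w2)" by (simp add: algebra_simps)
  show 1: "sinh (T*dE) = - \<i> * sin (2 * of_real pi * w1 / w2)" unfolding a by (rule sinh_mi)
  show "q - inverse q = 2 * \<i> * sin (2 * of_real pi * w1 / w2)"
    unfolding q_def b sin_exp_eq by (simp add: exp_minus field_simps)
  show 2: "exp (- (T*dE)) = q" unfolding a q_def b by simp
  show 3: "exp (T*dE) = inverse q" unfolding a q_def b by (simp add: exp_minus)
  show "q + inverse q = exp (T*dE) + exp (-(T*dE))" unfolding 2 3 by simp
  show "q + inverse q = exp (T*(- dE)) + exp (-(T*(- dE)))" unfolding mult_minus_right minus_minus 2 3 by simp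
  show "sinh (T*dE) \<noteq> 0" unfolding 1 using S by simp
qed

theorem proposition2:
  fixes N :: nat and w1 w2 :: complex and gN :: "nat \<Rightarrow> complex"
  assumes "N \<ge> 1" and "w1 \<noteq> 0" and "w2 \<noteq> 0"
    and "sin (2 * of_real pi * w1 / w2) \<noteq> 0"
  shows "Uq_gl_rep N (exp (2 * of_real pi * \<i> * w1 / w2))
           (Kop N w2 gN) (Kinvop N w2 gN) (Eop N w1 w2 gN) (Fop N w1 w2 gN)
           (generic N w1 w2)"
proof -
  define T where "T = 2 * of_real pi / w2"
  define dE where "dE = - \<i> * w1"
  define CE where "CE n = 2 * \<i> * exp (of_real pi * \<i> * w1 / w2 * (of_nat n - 1)) / sin (2 * of_real pi * w1 / w2)" for n :: nat
  define CF where "CF n = - (\<i> * exp (- (of_real pi * \<i> * w1 / w2 * (of_nat n - 1))) / (2 * sin (2 * of_real pi * w1 / w2)))" for n :: nat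
  define q where "q = exp (2 * of_real pi * \<i> * w1 / w2)"
  have Eeq: "Eop N w1 w2 gN = (\<lambda>n. Gop N gN T dE (CE n) n (n+1))"
    unfolding T_def dE_def CE_def by (rule ext) (rule main_setup(1)[OF assms(3)])
  have Feq: "Fop N w1 w2 gN = (\<lambda>n. Gop N gN T (- dE) (CF n) n (n-1))"
    unfolding T_def dE_def CF_def by (rule ext) (rule main_setup(2)[OF assms(3)])
  note cf = const_facts[OF assms(3) assms(4), folded T_def dE_def q_def]
  have gr: "sinh (T*(gam N gN x n j - gam N gN x n k)) \<noteq> 0"
     "sinh (T*(gam N gN x n j - (gam N gN x n k + dE))) \<noteq> 0"
     "sinh (T*(gam N gN x n j - (gam N gN x n k + - dE))) \<noteq> 0"
    if "generic N w1 w2 x" "n \<in> {1..<N}" "j \<in> {1..n}" "k \<in> {1..n}" "j \<noteq> k" for x n j k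
    using gen_rows[OF that, of gN, folded T_def dE_def] by auto
  have K1: "\<forall>n\<in>{1..N}. \<forall>m\<in>{1..N}. \<forall>f x. generic N w1 w2 x \<longrightarrow>
      Kop N w2 gN n (Kop N w2 gN m f) x = Kop N w2 gN m (Kop N w2 gN n f) x"
    unfolding Kop_def by (simp add: mult_ac)
  have K2: "\<forall>n\<in>{1..N}. \<forall>f x. generic N w1 w2 x \<longrightarrow>
      Kop N w2 gN n (Kinvop N w2 gN n f) x = f x \<and> Kinvop N w2 gN n (Kop N w2 gN n f) x = f x"
    unfolding Kop_def Kinvop_def by (simp add: mult.assoc[symmetric] mult_exp_exp)
  have expab: "exp a * exp (- (a + b)) = exp (- b)" for a b :: complex
    by (simp add: mult_exp_exp)
  have q1: "q powi 1 = q" by (metis of_nat_1 power_int_of_nat power_one_right)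
  have qm1: "q powi (-1) = inverse q" by (simp add: power_int_minus q1)
  have K3: "\<forall>n\<in>{1..N}. \<forall>m\<in>{1..<N}. \<forall>f x. generic N w1 w2 x \<longrightarrow>
      Kop N w2 gN n (Eop N w1 w2 gN m (Kinvop N w2 gN n f)) x = q powi (of_bool (n = m) - of_bool (n = m + 1)) * Eop N w1 w2 gN m f x"
  proof (intro ballI allI impI)
    fix n m f x assume n: "n \<in> {1..N}" and m: "m \<in> {1..<N}"
    have mN: "m \<noteq> N" and n1: "1 \<le> n" using n m by auto
    have ph: "exp (Kexp N w2 gN n x) * exp (- Kexp N w2 gN n (shift x m j dE)) = q powi (of_bool (n = m) - of_bool (n = m + 1))"
      if j: "j \<in> {1..m}" for j
    proof -
      have ks: "Kexp N w2 gN n (shift x m j dE) = Kexp N w2 gN n x + T * dE * (of_bool (n = m) - of_bool (n = m + 1))"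
        by (simp add: Kexp_shift[OF mN j n1] T_def)
      show ?thesis unfolding ks expab
        by (cases "n = m"; cases "n = m + 1") (simp_all add: cf q1 qm1)
    qed
    have "Kop N w2 gN n (Gop N gN T dE (CE m) m (m+1) (Kinvop N w2 gN n f)) x
      = CE m * (\<Sum>j=1..m. gco N gN T dE m (m+1) x j * (exp (Kexp N w2 gN n x) * exp (- Kexp N w2 gN n (shift x m j dE))) * f (shift x m j dE))"
      unfolding Kop_def Kinvop_def Gop_def by (simp add: sum_distrib_left mult_ac)
    also have "\<dots> = CE m * (\<Sum>j=1..m. gco N gN T dE m (m+1) x j * q powi (of_bool (n = m) - of_bool (n = m + 1)) * f (shift x m j dE))"
      using ph by simp
    also have "\<dots> = q powi (of_bool (n = m) - of_bool (n = m + 1)) * Gop N gN T dE (CE m) m (m+1) f x"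
      unfolding Gop_def by (simp add: sum_distrib_left mult_ac)
    finally show "Kop N w2 gN n (Eop N w1 w2 gN m (Kinvop N w2 gN n f)) x = q powi (of_bool (n = m) - of_bool (n = m + 1)) * Eop N w1 w2 gN m f x"
      unfolding Eeq .
  qed
  have K4: "\<forall>n\<in>{1..N}. \<forall>m\<in>{1..<N}. \<forall>f x. generic N w1 w2 x \<longrightarrow>
      Kop N w2 gN n (Fop N w1 w2 gN m (Kinvop N w2 gN n f)) x = q powi (of_bool (n = m + 1) - of_bool (n = m)) * Fop N w1 w2 gN m f x"
  proof (intro ballI allI impI)
    fix n m f x assume n: "n \<in> {1..N}" and m: "m \<in> {1..<N}"
    have mN: "m \<noteq> N" and n1: "1 \<le> n" using n m by auto
    have ph: "exp (Kexp N w2 gN n x) * exp (- Kexp N w2 gN n (shift x m j (- dE))) = q powi (of_bool (n = m + 1) - of_bool (n = m))"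
      if j: "j \<in> {1..m}" for j
    proof -
      have ks: "Kexp N w2 gN n (shift x m j (- dE)) = Kexp N w2 gN n x + T * (- dE) * (of_bool (n = m) - of_bool (n = m + 1))"
        by (simp add: Kexp_shift[OF mN j n1] T_def)
      show ?thesis unfolding ks expab
        by (cases "n = m"; cases "n = m + 1") (simp_all add: cf q1 qm1)
    qed
    have "Kop N w2 gN n (Gop N gN T (- dE) (CF m) m (m-1) (Kinvop N w2 gN n f)) x
      = CF m * (\<Sum>j=1..m. gco N gN T (- dE) m (m-1) x j * (exp (Kexp N w2 gN n x) * exp (- Kexp N w2 gN n (shift x m j (- dE)))) * f (shift x m j (- dE)))"
      unfolding Kop_def Kinvop_def Gop_def by (simp add: sum_distrib_left mult_ac)
    also have "\<dots> = CF m * (\<Sum>j=1..m. gco N gN T (- dE) m (m-1) x j * q powi (of_bool (n = m + 1) - of_bool (n = m)) * f (shift x m j (- dE)))"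
      using ph by simp
    also have "\<dots> = q powi (of_bool (n = m + 1) - of_bool (n = m)) * Gop N gN T (- dE) (CF m) m (m-1) f x"
      unfolding Gop_def by (simp add: sum_distrib_left mult_ac)
    finally show "Kop N w2 gN n (Fop N w1 w2 gN m (Kinvop N w2 gN n f)) x = q powi (of_bool (n = m + 1) - of_bool (n = m)) * Fop N w1 w2 gN m f x"
      unfolding Feq .
  qed
  have QE: "q + inverse q = exp (T*dE) + exp (-(T*dE))" by (rule cf(5))
  have QF: "q + inverse q = exp (T*(- dE)) + exp (-(T*(- dE)))" by (rule cf(6))
  have S: "sin (2 * of_real pi * w1 / w2) \<noteq> 0" by (rule assms(4))
  have EF: "\<forall>n\<in>{1..<N}. \<forall>m\<in>{1..<N}. \<forall>f x. generic N w1 w2 x \<longrightarrow>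
        Eop N w1 w2 gN n (Fop N w1 w2 gN m f) x - Fop N w1 w2 gN m (Eop N w1 w2 gN n f) x =
          (if n = m then (Kop N w2 gN n (Kinvop N w2 gN (n+1) f) x - Kinvop N w2 gN n (Kop N w2 gN (n+1) f) x) / (q - inverse q) else 0)"
  proof (intro ballI allI impI)
    fix n m f x assume n: "n \<in> {1..<N}" and m: "m \<in> {1..<N}" and gx: "generic N w1 w2 x"
    show "Eop N w1 w2 gN n (Fop N w1 w2 gN m f) x - Fop N w1 w2 gN m (Eop N w1 w2 gN n f) x =
          (if n = m then (Kop N w2 gN n (Kinvop N w2 gN (n+1) f) x - Kinvop N w2 gN n (Kop N w2 gN (n+1) f) x) / (q - inverse q) else 0)"
    proof (cases "n = m")
      case True
      define M where "M = 2 * sum (gam N gN x n) {1..n} - sum (gam N gN x (n+1)) {1..n+1} - sum (gam N gN x (n-1)) {1..n-1}"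
      have "Gop N gN T dE (CE n) n (n+1) (Gop N gN T (- dE) (CF n) n (n-1) f) x - Gop N gN T (- dE) (CF n) n (n-1) (Gop N gN T dE (CE n) n (n+1) f) x
         = CE n * CF n * sinh (T*dE) * sinh (T * M) * f x"
        unfolding M_def
        by (rule EF_same) (use n gx gr[OF gx n] cf(7) in auto)
      moreover have "(Kop N w2 gN n (Kinvop N w2 gN (n+1) f) x - Kinvop N w2 gN n (Kop N w2 gN (n+1) f) x) / (q - inverse q)
         = CE n * CF n * sinh (T*dE) * sinh (T * M) * f x"
      proof -
        have KM: "Kexp N w2 gN n x - Kexp N w2 gN (n+1) x = T * M"
          unfolding M_def Kexp_def T_def by (simp add: algebra_simps)
        have e1: "exp (Kexp N w2 gN n x) * (exp (- Kexp N w2 gN (n+1) x) * f x) = exp (T * M) * f x"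
          by (simp add: KM[symmetric] mult.assoc[symmetric] mult_exp_exp)
        have e2: "exp (- Kexp N w2 gN n x) * (exp (Kexp N w2 gN (n+1) x) * f x) = exp (- (T * M)) * f x"
          by (simp add: KM[symmetric] mult.assoc[symmetric] mult_exp_exp)
        have CC: "CE n * CF n = 1 / (sin (2 * of_real pi * w1 / w2))^2"
          unfolding CE_def CF_def using S by (simp add: field_simps exp_minus power2_eq_square)
        show ?thesis unfolding Kop_def Kinvop_def e1 e2 CC cf(1) cf(2) unfolding sinh_field_def using S
          by (simp add: field_simps power2_eq_square)
      qed
      ultimately show ?thesis using True unfolding Eeq Feq by simp
    next
      case False
      show ?thesis
      proof (cases "m = n + 1")
        case True
        have "Gop N gN T dE (CE n) n (n+1) (Gop N gN T (- dE) (CF (n+1)) (n+1) n f) x = Gop N gN T (- dE) (CF (n+1)) (n+1) n (Gop N gN T dE (CE n) n (n+1) f) x"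
          by (rule EF_adj) (use n m True in auto)
        then show ?thesis using True unfolding Eeq Feq by simp
      next
        case False2: False
        have "Gop N gN T dE (CE n) n (n+1) (Gop N gN T (- dE) (CF m) m (m-1) f) x = Gop N gN T (- dE) (CF m) m (m-1) (Gop N gN T dE (CE n) n (n+1) f) x"
          by (rule Gop_indep) (use n m False False2 in auto)
        then show ?thesis using False unfolding Eeq Feq by simp
      qed
    qed
  qed
  have SE: "serre_rels N q (Eop N w1 w2 gN) (generic N w1 w2)"
    unfolding serre_rels_def
  proof (intro conjI allI ballI impI)
    fix n m f x assume n: "n \<in> {1..<N}" and m: "m \<in> {1..<N}" and nm: "m \<noteq> n + 1 \<and> n \<noteq> m + 1"
      and gx: "generic N w1 w2 x"
    show "Eop N w1 w2 gN n (Eop N w1 w2 gN m f) x = Eop N w1 w2 gN m (Eop N w1 w2 gN n f) x"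
    proof (cases "n = m")
      case False
      show ?thesis unfolding Eeq by (rule Gop_indep) (use n m nm False in auto)
    qed simp
  next
    fix n f x assume n: "1 \<le> n \<and> n + 1 < N" and gx: "generic N w1 w2 x"
    have n1: "n \<in> {1..<N}" and n2: "n + 1 \<in> {1..<N}" using n by auto
    show "Eop N w1 w2 gN n (Eop N w1 w2 gN n (Eop N w1 w2 gN (n+1) f)) x
          - (q + inverse q) * Eop N w1 w2 gN n (Eop N w1 w2 gN (n+1) (Eop N w1 w2 gN n f)) x
          + Eop N w1 w2 gN (n+1) (Eop N w1 w2 gN n (Eop N w1 w2 gN n f)) x = 0"
      unfolding Eeq by (rule serre_I[OF _ _ _ _ _ _ _ _ QE]) (use n gr[OF gx n1] in auto)
  next
    fix n f x assume n: "1 \<le> n \<and> n + 1 < N" and gx: "generic N w1 w2 x"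
    have n1: "n \<in> {1..<N}" and n2: "n + 1 \<in> {1..<N}" using n by auto
    show "Eop N w1 w2 gN (n+1) (Eop N w1 w2 gN (n+1) (Eop N w1 w2 gN n f)) x
          - (q + inverse q) * Eop N w1 w2 gN (n+1) (Eop N w1 w2 gN n (Eop N w1 w2 gN (n+1) f)) x
          + Eop N w1 w2 gN n (Eop N w1 w2 gN (n+1) (Eop N w1 w2 gN (n+1) f)) x = 0"
      unfolding Eeq by (rule serre_II[OF _ _ _ _ _ _ _ _ QE]) (use n gr[OF gx n1] gr[OF gx n2] in auto)
  qed
  have SF: "serre_rels N q (Fop N w1 w2 gN) (generic N w1 w2)"
    unfolding serre_rels_def
  proof (intro conjI allI ballI impI)
    fix n m f x assume n: "n \<in> {1..<N}" and m: "m \<in> {1..<N}" and nm: "m \<noteq> n + 1 \<and> n \<noteq> m + 1"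
      and gx: "generic N w1 w2 x"
    show "Fop N w1 w2 gN n (Fop N w1 w2 gN m f) x = Fop N w1 w2 gN m (Fop N w1 w2 gN n f) x"
    proof (cases "n = m")
      case False
      show ?thesis unfolding Feq by (rule Gop_indep) (use n m nm False in auto)
    qed simp
  next
    fix n f x assume n: "1 \<le> n \<and> n + 1 < N" and gx: "generic N w1 w2 x"
    have n1: "n \<in> {1..<N}" and n2: "n + 1 \<in> {1..<N}" using n by auto
    have nn: "n + 1 - 1 = n" by simp
    show "Fop N w1 w2 gN n (Fop N w1 w2 gN n (Fop N w1 w2 gN (n+1) f)) x
          - (q + inverse q) * Fop N w1 w2 gN n (Fop N w1 w2 gN (n+1) (Fop N w1 w2 gN n f)) x
          + Fop N w1 w2 gN (n+1) (Fop N w1 w2 gN n (Fop N w1 w2 gN n f)) x = 0"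
      unfolding Feq nn by (rule serre_II[OF _ _ _ _ _ _ _ _ QF]) (use n gr[OF gx n1] gr[OF gx n2] in auto)
  next
    fix n f x assume n: "1 \<le> n \<and> n + 1 < N" and gx: "generic N w1 w2 x"
    have n1: "n \<in> {1..<N}" and n2: "n + 1 \<in> {1..<N}" using n by auto
    have nn: "n + 1 - 1 = n" by simp
    show "Fop N w1 w2 gN (n+1) (Fop N w1 w2 gN (n+1) (Fop N w1 w2 gN n f)) x
          - (q + inverse q) * Fop N w1 w2 gN (n+1) (Fop N w1 w2 gN n (Fop N w1 w2 gN (n+1) f)) x
          + Fop N w1 w2 gN n (Fop N w1 w2 gN (n+1) (Fop N w1 w2 gN (n+1) f)) x = 0"
      unfolding Feq nn by (rule serre_I[OF _ _ _ _ _ _ _ _ QF]) (use n gr[OF gx n2] in auto)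
  qed
  show ?thesis
    unfolding Uq_gl_rep_def q_def[symmetric]
    using K1 K2 K3 K4 EF SE SF by blast
qed

end
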